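(* Fix $\lambda\in\mathbb R$. The following four subsets of $\mathcal X$ are all equal: (a) $\Pi^{(a)}_\lambda=\{x\in\mathcal X: g_\lambda(x)=0\}$; (b) $\Pi^{(b)}_\lambda=\{x\in\mathcal X: H_\lambda(x,0)<H_\lambda(x,1)\}$; (c) $\Pi^{(c)}_\lambda=\{x\in\mathcal X: \exists \sigma\in\Sigma,\ \sigma\neq 0,\ \text{such that } J^{(h_{\sigma,\lambda})}_\lambda(x)<J^{(h_{0,\lambda})}_\lambda(x)\}$; (d) $\Pi^{(d)}_\lambda=\{x\in\mathcal X: \exists \sigma\in\Sigma,\ \sigma\neq 0,\ \text{such that } (1-\beta)\big(L(x,\sigma)-c(x,1)\big)<W_\lambda(x)-\mathbb E[\beta^\sigma W_\lambda(X_\sigma)\mid X_0=x]\}$.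
   Context: A restless bandit (RB) consists of a finite or countable state space $\mathcal X$, action set $\{0,1\}$ (0 = passive, 1 = active), transition matrices $P(0),P(1)$ on $\mathcal X$ ($P_{xy}(a)$ is the probability of moving from $x$ to $y$ under action $a$), and a cost function $c:\mathcal X\times\{0,1\}\to\mathbb R$; $\beta\in(0,1)$ is a discount factor. For $\lambda\in\mathbb R$ let $c_\lambda(x,a)=c(x,a)+\lambda a$. For a (possibly history-dependent) policy $h$, $J^{(h)}_\lambda(x)=(1-\beta)\mathbb E[\sum_{t\ge0}\beta^t c_\lambda(X_t,A_t)\mid X_0=x]$ where actions $A_t$ are chosen by $h$ and $X_{t+1}$ is drawn from $P_{X_t\,\cdot}(A_t)$. Let $V_\lambda$ be the unique fixed point of $V_\lambda(x)=\min\{H_\lambda(x,0),H_\lambda(x,1)\}$, where $H_\lambda(x,a)=(1-\beta)c_\lambda(x,a)+\beta\sum_{y}P_{xy}(a)V_\lambda(y)$. Let $g_\lambda(x)=0$ if $H_\lambda(x,0)<H_\lambda(x,1)$ and $g_\lambda(x)=1$ otherwise (ties broken toward the active action); $g_\lambda$ is an optimal Markov policy for minimizing $J_\lambda$. Let $\Sigma$ be the family of all stopping times with respect to the natural filtration of $\{X_t\}_{t\ge0}$. For $x\in\mathcal X$ and $\tau\in\Sigma$ define $M(x,\tau)=\mathbb E[\beta^\tau\mid X_0=x,\ A_t=0 \text{ for } t<\tau]$, $L(x,\tau)=\mathbb E[\sum_{t=0}^{\tau-1}\beta^t c(X_t,0)+\beta^\tau c(X_\tau,1)\mid X_0=x,\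 A_t=0\text{ for }t<\tau]$, and $W_\lambda(x)=(1-\beta)\lambda+\beta\sum_{y}P_{xy}(1)V_\lambda(y)$. Expectations involving $X_\sigma$ in (d) are under passive actions before time $\sigma$. For $\tau\in\Sigma$, $h_{\tau,\lambda}$ denotes the history-dependent policy that takes the passive action at times $0,\dots,\tau-1$, the active action at time $\tau$, and follows $g_\lambda$ thereafter; $h_{0,\lambda}$ is this policy with $\tau=0$. *)

theory Defs
  imports "HOL-Analysis.Analysis" "HOL-Library.Extended_Nat"
begin

text \<open>Actions are the naturals 0 (passive)
  and 1 (active). P a x y is the transition probability from x to y under action a,
  c x a is the cost, \<beta> the discount factor, l the subsidy/charge lambda.\<close>

definition cl :: "('x \<Rightarrow> nat \<Rightarrow> real) \<Rightarrow> real \<Rightarrow> 'x \<Rightarrow> nat \<Rightarrow> real" where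
  "cl c l x a = c x a + l * real a"

definition Hop :: "(nat \<Rightarrow> 'x \<Rightarrow> 'x \<Rightarrow> real) \<Rightarrow> ('x \<Rightarrow> nat \<Rightarrow> real) \<Rightarrow> real \<Rightarrow> real
    \<Rightarrow> ('x \<Rightarrow> real) \<Rightarrow> 'x \<Rightarrow> nat \<Rightarrow> real" where
  "Hop P c \<beta> l V x a = (1 - \<beta>) * cl c l x a + \<beta> * infsum (\<lambda>y. P a x y * V y) UNIV"

definition Vf :: "(nat \<Rightarrow> 'x \<Rightarrow> 'x \<Rightarrow> real) \<Rightarrow> ('x \<Rightarrow> nat \<Rightarrow> real) \<Rightarrow> real \<Rightarrow> real \<Rightarrow> 'x \<Rightarrow> real" where
  "Vf P c \<beta> l = (THE V. (\<exists>B. \<forall>x. \<bar>V x\<bar> \<le> B) \<and>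
      (\<forall>x. V x = min (Hop P c \<beta> l V x 0) (Hop P c \<beta> l V x 1)))"

definition Hf :: "(nat \<Rightarrow> 'x \<Rightarrow> 'x \<Rightarrow> real) \<Rightarrow> ('x \<Rightarrow> nat \<Rightarrow> real) \<Rightarrow> real \<Rightarrow> real \<Rightarrow> 'x \<Rightarrow> nat \<Rightarrow> real" where
  "Hf P c \<beta> l x a = Hop P c \<beta> l (Vf P c \<beta> l) x a"

definition gf :: "(nat \<Rightarrow> 'x \<Rightarrow> 'x \<Rightarrow> real) \<Rightarrow> ('x \<Rightarrow> nat \<Rightarrow> real) \<Rightarrow> real \<Rightarrow> real \<Rightarrow> 'x \<Rightarrow> nat" where
  "gf P c \<beta> l x = (if Hf P c \<beta> l x 0 < Hf P c \<beta> l x 1 then 0 else 1)"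

definition Wf :: "(nat \<Rightarrow> 'x \<Rightarrow> 'x \<Rightarrow> real) \<Rightarrow> ('x \<Rightarrow> nat \<Rightarrow> real) \<Rightarrow> real \<Rightarrow> real \<Rightarrow> 'x \<Rightarrow> real" where
  "Wf P c \<beta> l x = (1 - \<beta>) * l + \<beta> * infsum (\<lambda>y. P 1 x y * Vf P c \<beta> l y) UNIV"

text \<open>A (deterministic, history-dependent) policy
  h maps the history [X_0,...,X_t] to the action A_t.\<close>
definition path_prob :: "(nat \<Rightarrow> 'x \<Rightarrow> 'x \<Rightarrow> real) \<Rightarrow> ('x list \<Rightarrow> nat) \<Rightarrow> 'x list \<Rightarrow> real" where
  "path_prob P h xs = (\<Prod>i<length xs - 1. P (h (take (Suc i) xs)) (xs ! i) (xs ! Suc i))"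

definition paths :: "'x \<Rightarrow> nat \<Rightarrow> 'x list set" where
  "paths x n = {xs. length xs = Suc n \<and> xs ! 0 = x}"

definition Eh :: "(nat \<Rightarrow> 'x \<Rightarrow> 'x \<Rightarrow> real) \<Rightarrow> ('x list \<Rightarrow> nat) \<Rightarrow> 'x \<Rightarrow> nat
    \<Rightarrow> ('x list \<Rightarrow> real) \<Rightarrow> real" where
  "Eh P h x n f = infsum (\<lambda>xs. path_prob P h xs * f xs) (paths x n)"

definition Jh :: "(nat \<Rightarrow> 'x \<Rightarrow> 'x \<Rightarrow> real) \<Rightarrow> ('x \<Rightarrow> nat \<Rightarrow> real) \<Rightarrow> real \<Rightarrow> real
    \<Rightarrow> ('x list \<Rightarrow> nat) \<Rightarrow> 'x \<Rightarrow> real" where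
  "Jh P c \<beta> l h x = (1 - \<beta>) * (\<Sum>n. \<beta> ^ n * Eh P h x n (\<lambda>xs. cl c l (last xs) (h xs)))"

text \<open>Stopping times w.r.t. the natural filtration of the state process, on path
  space (values in nat extended by infinity): the event {tau = n} is determined by
  X_0,...,X_n. (For a countable state space these are exactly the events of the
  natural filtration.)\<close>
definition stopping_time :: "((nat \<Rightarrow> 'x) \<Rightarrow> enat) \<Rightarrow> bool" where
  "stopping_time \<tau> \<longleftrightarrow>
     (\<forall>n \<omega> \<omega>'. (\<forall>i\<le>n. \<omega> i = \<omega>' i) \<longrightarrow> (\<tau> \<omega> = enat n \<longleftrightarrow> \<tau> \<omega>' = enat n))"

text \<open>Any path extending a nonempty history (the value of a stopping time on events
  determined by the history does not depend on the extension).\<close>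
definition ext :: "'x list \<Rightarrow> nat \<Rightarrow> 'x" where
  "ext xs i = xs ! min i (length xs - 1)"

definition h_stop :: "(nat \<Rightarrow> 'x \<Rightarrow> 'x \<Rightarrow> real) \<Rightarrow> ('x \<Rightarrow> nat \<Rightarrow> real) \<Rightarrow> real \<Rightarrow> real
    \<Rightarrow> ((nat \<Rightarrow> 'x) \<Rightarrow> enat) \<Rightarrow> 'x list \<Rightarrow> nat" where
  "h_stop P c \<beta> l \<tau> xs =
     (if enat (length xs - 1) < \<tau> (ext xs) then 0
      else if \<tau> (ext xs) = enat (length xs - 1) then 1
      else gf P c \<beta> l (last xs))"

definition passive_pol :: "'x list \<Rightarrow> nat" where
  "passive_pol xs = 0"

text \<open>L(x,tau) = E[sum_{t<tau} beta^t c(X_t,0) + beta^tau c(X_tau,1)] under passive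
  actions before tau (beta^infinity = 0), expanded termwise.\<close>
definition Lf :: "(nat \<Rightarrow> 'x \<Rightarrow> 'x \<Rightarrow> real) \<Rightarrow> ('x \<Rightarrow> nat \<Rightarrow> real) \<Rightarrow> real
    \<Rightarrow> 'x \<Rightarrow> ((nat \<Rightarrow> 'x) \<Rightarrow> enat) \<Rightarrow> real" where
  "Lf P c \<beta> x \<tau> =
     (\<Sum>t. \<beta> ^ t * Eh P passive_pol x t (\<lambda>xs. if enat t < \<tau> (ext xs) then c (last xs) 0 else 0))
   + (\<Sum>t. \<beta> ^ t * Eh P passive_pol x t (\<lambda>xs. if \<tau> (ext xs) = enat t then c (last xs) 1 else 0))"

text \<open>E[beta^sigma f(X_sigma) | X_0 = x] under passive actions (beta^infinity = 0).\<close>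
definition Estop :: "(nat \<Rightarrow> 'x \<Rightarrow> 'x \<Rightarrow> real) \<Rightarrow> real \<Rightarrow> 'x \<Rightarrow> ((nat \<Rightarrow> 'x) \<Rightarrow> enat)
    \<Rightarrow> ('x \<Rightarrow> real) \<Rightarrow> real" where
  "Estop P \<beta> x \<sigma> f =
     (\<Sum>t. \<beta> ^ t * Eh P passive_pol x t (\<lambda>xs. if \<sigma> (ext xs) = enat t then f (last xs) else 0))"

end

theory Submission
  imports Defs
begin


lemma infsum_suminf_nat:
  fixes f :: "nat \<Rightarrow> real"
  assumes "f summable_on UNIV"
  shows "infsum f UNIV = suminf f"
  using assms has_sum_imp_sums sums_unique summable_iff_has_sum_infsum by metis

lemma infsum_diff_real:
  fixes f g :: "'a \<Rightarrow> real"
  assumes "f summable_on A" "g summable_on A"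
  shows "infsum (\<lambda>x. f x - g x) A = infsum f A - infsum g A"
proof -
  have "(\<lambda>x. - g x) summable_on A" using assms(2) summable_on_uminus by blast
  hence "infsum (\<lambda>x. f x + - g x) A = infsum f A + infsum (\<lambda>x. - g x) A"
    using infsum_add[OF assms(1)] by blast
  thus ?thesis by (simp add: infsum_uminus)
qed

lemma zero_by_pow:
  fixes d K \<beta> :: real
  assumes "0 < \<beta>" "\<beta> < 1" "\<And>n. \<bar>d\<bar> \<le> \<beta> ^ n * K"
  shows "d = 0"
proof -
  have "(\<lambda>n. \<beta> ^ n * K) \<longlonglongrightarrow> 0 * K"
    by (intro tendsto_mult LIMSEQ_power_zero) (use assms in auto)
  hence "\<bar>d\<bar> \<le> 0"
    using LIMSEQ_le_const[of "\<lambda>n. \<beta> ^ n * K" 0 "\<bar>d\<bar>"] assms(3) by auto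
  thus ?thesis by simp
qed



locale rb =
  fixes P :: "nat \<Rightarrow> 'x::countable \<Rightarrow> 'x \<Rightarrow> real" and c :: "'x \<Rightarrow> nat \<Rightarrow> real"
    and \<beta> :: real and Bc :: real
  assumes b0: "0 < \<beta>" and b1: "\<beta> < 1"
    and Pnn: "\<And>a x y. a \<le> 1 \<Longrightarrow> 0 \<le> P a x y"
    and Psum: "\<And>a x. a \<le> 1 \<Longrightarrow> ((\<lambda>y. P a x y) has_sum 1) UNIV"
    and cbd: "\<And>x a. a \<le> 1 \<Longrightarrow> \<bar>c x a\<bar> \<le> Bc"
begin

lemma Bc_nn: "0 \<le> Bc" using cbd[of 0 undefined] by simp

lemma P_summable: "a \<le> 1 \<Longrightarrow> (\<lambda>y. P a x y) summable_on UNIV"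
  using Psum by (auto simp: summable_on_def)

lemma P_infsum: "a \<le> 1 \<Longrightarrow> infsum (\<lambda>y. P a x y) UNIV = 1"
  using Psum infsumI by blast

lemma PV_summable:
  assumes "a \<le> 1" "\<And>y. \<bar>V y\<bar> \<le> K"
  shows "(\<lambda>y. P a x y * V y) summable_on UNIV"
proof -
  have "(\<lambda>y. P a x y * K) summable_on UNIV"
    using P_summable[OF assms(1)] summable_on_cmult_left by blast
  moreover have "norm (P a x y * V y) \<le> P a x y * K" for y
    using Pnn[OF assms(1)] assms(2)[of y] by (simp add: abs_mult mult_left_mono)
  ultimately have "(\<lambda>y. norm (P a x y * V y)) summable_on UNIV"
    by (rule_tac Infinite_Sum.abs_summable_on_comparison_test') auto
  thus ?thesis using summable_on_iff_abs_summable_on_real by blast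
qed

lemma PV_bound:
  assumes "a \<le> 1" "\<And>y. \<bar>V y\<bar> \<le> K"
  shows "\<bar>infsum (\<lambda>y. P a x y * V y) UNIV\<bar> \<le> K"
proof -
  have s: "(\<lambda>y. P a x y * K) summable_on UNIV"
    using P_summable[OF assms(1)] summable_on_cmult_left by blast
  have n: "norm (P a x y * V y) \<le> P a x y * K" for y
    using Pnn[OF assms(1)] assms(2)[of y] by (simp add: abs_mult mult_left_mono)
  have as: "(\<lambda>y. norm (P a x y * V y)) summable_on UNIV"
    by (rule Infinite_Sum.abs_summable_on_comparison_test'[OF s]) (rule n)
  have "norm (infsum (\<lambda>y. P a x y * V y) UNIV) \<le> infsum (\<lambda>y. norm (P a x y * V y)) UNIV"
    by (rule norm_infsum_bound[OF as])
  also have "\<dots> \<le> infsum (\<lambda>y. P a x y * K) UNIV"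
    by (rule infsum_mono[OF as s]) (rule n)
  also have "\<dots> = K" using P_infsum[OF assms(1)] infsum_cmult_left'[of "\<lambda>y. P a x y" K UNIV] by simp
  finally show ?thesis by simp
qed

lemma PV_lower:
  assumes "a \<le> 1" "\<And>y. V y \<ge> - K" "\<And>y. \<bar>V y\<bar> \<le> K0"
  shows "infsum (\<lambda>y. P a x y * V y) UNIV \<ge> - K"
proof -
  have s: "(\<lambda>y. P a x y * (-K)) summable_on UNIV"
    using P_summable[OF assms(1)] summable_on_cmult_left by blast
  have "infsum (\<lambda>y. P a x y * (-K)) UNIV \<le> infsum (\<lambda>y. P a x y * V y) UNIV"
  proof (rule infsum_mono[OF s PV_summable[OF assms(1,3)]])
    fix y show "P a x y * (-K) \<le> P a x y * V y"
      using mult_left_mono[OF assms(2)[of y] Pnn[OF assms(1)]] by simp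
  qed
  moreover have "infsum (\<lambda>y. P a x y * (-K)) UNIV = -K"
    using P_infsum[OF assms(1)] infsum_cmult_left'[of "\<lambda>y. P a x y" "-K" UNIV] by simp
  ultimately show ?thesis by simp
qed

lemma PV_diff:
  assumes "a \<le> 1" "\<And>y. \<bar>V y\<bar> \<le> K1" "\<And>y. \<bar>U y\<bar> \<le> K2"
  shows "infsum (\<lambda>y. P a x y * V y) UNIV - infsum (\<lambda>y. P a x y * U y) UNIV
       = infsum (\<lambda>y. P a x y * (V y - U y)) UNIV"
  using infsum_diff_real[OF PV_summable[OF assms(1,2)] PV_summable[OF assms(1,3)]]
  by (simp add: right_diff_distrib)

lemma swap_sum:
  fixes a :: "nat \<Rightarrow> 'y \<Rightarrow> real" and p :: "'y \<Rightarrow> real"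
  assumes p: "(p has_sum 1) UNIV" "\<And>y. p y \<ge> 0" and K: "K \<ge> 0"
    and ab: "\<And>n y. \<bar>a n y\<bar> \<le> \<beta> ^ n * K * p y"
  shows "(\<Sum>n. infsum (a n) UNIV) = infsum (\<lambda>y. \<Sum>n. a n y) UNIV"
    and "summable (\<lambda>n. infsum (a n) UNIV)"
proof -
  define G where "G = (\<lambda>(n::nat, y). \<beta> ^ n * K * p y)"
  have inner: "((\<lambda>y. G (n, y)) has_sum \<beta> ^ n * K) UNIV" for n
    unfolding G_def using has_sum_cmult_right[OF p(1), of "\<beta> ^ n * K"] by simp
  have geo: "summable (\<lambda>n. \<beta> ^ n * K)"
    using summable_geometric[of \<beta>] b0 b1 by (intro summable_mult2) auto
  have outer: "(\<lambda>n. \<beta> ^ n * K) summable_on UNIV"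
    using summable_on_UNIV_nonneg_real_iff[of "\<lambda>n. \<beta> ^ n * K"] geo b0 K by auto
  have Gs: "G summable_on (UNIV \<times> UNIV)"
    using summable_on_SigmaI[where f=G and A=UNIV and B="\<lambda>_. UNIV", OF inner outer]
    unfolding G_def using b0 K p(2) by (simp add: split_beta)
  have As: "(\<lambda>(n, y). a n y) summable_on (UNIV \<times> UNIV)"
  proof -
    have "(\<lambda>z. norm ((\<lambda>(n, y). a n y) z)) summable_on (UNIV \<times> UNIV)"
      by (rule Infinite_Sum.abs_summable_on_comparison_test'[OF Gs]) (simp add: G_def split_beta ab)
    thus ?thesis using summable_on_iff_abs_summable_on_real by blast
  qed
  have ps: "(\<lambda>y. \<beta> ^ n * K * p y) summable_on UNIV" for n
    using inner unfolding G_def by (auto simp: summable_on_def)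
  have an: "a n summable_on UNIV" for n
  proof -
    have "(\<lambda>y. norm (a n y)) summable_on UNIV"
      by (rule Infinite_Sum.abs_summable_on_comparison_test'[OF ps]) (use ab in auto)
    thus ?thesis using summable_on_iff_abs_summable_on_real by blast
  qed
  have ay: "(\<lambda>n. a n y) summable_on UNIV" for y
  proof -
    have "(\<lambda>n. \<beta> ^ n * K * p y) summable_on UNIV"
      using summable_on_cmult_left[OF outer, of "p y"] by simp
    hence "(\<lambda>n. norm (a n y)) summable_on UNIV"
      by (rule Infinite_Sum.abs_summable_on_comparison_test') (use ab in auto)
    thus ?thesis using summable_on_iff_abs_summable_on_real by blast
  qed
  have os: "(\<lambda>n. infsum (a n) UNIV) summable_on UNIV"
  proof -
    have "(\<lambda>x. infsum (\<lambda>y. (\<lambda>(n, y). a n y) (x, y)) UNIV) summable_on UNIV"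
      by (rule summable_on_SigmaD[where A=UNIV and B="\<lambda>_. UNIV", OF As]) (use an in simp)
    thus ?thesis by simp
  qed
  show "summable (\<lambda>n. infsum (a n) UNIV)"
    using os summable_on_imp_summable by blast
  have "(\<Sum>n. infsum (a n) UNIV) = infsum (\<lambda>n. infsum (a n) UNIV) UNIV"
    using infsum_suminf_nat[OF os] by simp
  also have "\<dots> = infsum (\<lambda>y. infsum (\<lambda>n. a n y) UNIV) UNIV"
    using infsum_swap_banach[of "\<lambda>n y. a n y" UNIV UNIV] As by simp
  also have "\<dots> = infsum (\<lambda>y. \<Sum>n. a n y) UNIV"
    using infsum_suminf_nat[OF ay] by simp
  finally show "(\<Sum>n. infsum (a n) UNIV) = infsum (\<lambda>y. \<Sum>n. a n y) UNIV" .
qed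

end


definition hs :: "('x list \<Rightarrow> nat) \<Rightarrow> 'x \<Rightarrow> 'x list \<Rightarrow> nat" where
  "hs h x = (\<lambda>ys. h (x # ys))"

definition valid :: "('x list \<Rightarrow> nat) \<Rightarrow> bool" where
  "valid h \<longleftrightarrow> (\<forall>xs. h xs \<le> 1)"

lemma valid_hs: "valid h \<Longrightarrow> valid (hs h x)"
  by (simp add: valid_def hs_def)

lemma paths_0: "paths x 0 = {[x]}"
  by (auto simp: paths_def length_Suc_conv)

lemma mem_paths: "xs \<in> paths y n \<Longrightarrow> xs \<noteq> [] \<and> hd xs = y"
  by (cases xs) (auto simp: paths_def)

lemma paths_Suc: "paths x (Suc n) = (\<lambda>(y, ys). x # ys) ` (SIGMA y:UNIV. paths y n)"
proof safe
  fix xs assume "xs \<in> paths x (Suc n)"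
  then obtain ys where "xs = x # ys" "length ys = Suc n"
    by (auto simp: paths_def length_Suc_conv)
  thus "xs \<in> (\<lambda>(y, ys). x # ys) ` (SIGMA y:UNIV. paths y n)"
    by (intro image_eqI[of _ _ "(ys ! 0, ys)"]) (auto simp: paths_def)
qed (auto simp: paths_def)

lemma inj_cons: "inj_on (\<lambda>(y, ys). x # ys) (SIGMA y:UNIV. paths y n)"
  by (auto simp: inj_on_def paths_def)

lemma path_prob_single: "path_prob P h [x] = 1"
  by (simp add: path_prob_def)

lemma path_prob_Cons:
  assumes "ys \<noteq> []"
  shows "path_prob P h (x # ys) = P (h [x]) x (hd ys) * path_prob P (hs h x) ys"
proof -
  obtain m where m: "length ys = Suc m" using assms by (cases ys) auto
  have "path_prob P h (x # ys) = (\<Prod>i<Suc m. P (h (take (Suc i) (x # ys))) ((x # ys) ! i) ((x # ys) ! Suc i))"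
    by (simp add: path_prob_def m)
  also have "\<dots> = P (h [x]) x (hd ys) * (\<Prod>i<m. P (h (take (Suc (Suc i)) (x # ys))) ((x # ys) ! Suc i) ((x # ys) ! Suc (Suc i)))"
    by (subst prod.lessThan_Suc_shift) (simp add: hd_conv_nth assms)
  also have "(\<Prod>i<m. P (h (take (Suc (Suc i)) (x # ys))) ((x # ys) ! Suc i) ((x # ys) ! Suc (Suc i)))
      = path_prob P (hs h x) ys"
    by (simp add: path_prob_def m hs_def)
  finally show ?thesis .
qed

lemma Eh_cong_f: "(\<And>xs. xs \<in> paths x n \<Longrightarrow> f xs = f' xs) \<Longrightarrow> Eh P h x n f = Eh P h x n f'"
  unfolding Eh_def by (rule infsum_cong) simp

lemma path_prob_cong:
  assumes "xs \<noteq> []" "\<And>ys. ys \<noteq> [] \<Longrightarrow> hd ys = hd xs \<Longrightarrow> h ys = h' ys"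
  shows "path_prob P h xs = path_prob P h' xs"
  unfolding path_prob_def
proof (rule prod.cong[OF refl])
  fix i assume "i \<in> {..<length xs - 1}"
  hence "take (Suc i) xs \<noteq> []" "hd (take (Suc i) xs) = hd xs" using assms(1) by auto
  thus "P (h (take (Suc i) xs)) (xs ! i) (xs ! Suc i) = P (h' (take (Suc i) xs)) (xs ! i) (xs ! Suc i)"
    using assms(2) by simp
qed

lemma Eh_cong_h:
  assumes "\<And>ys. ys \<noteq> [] \<Longrightarrow> hd ys = x \<Longrightarrow> h ys = h' ys"
  shows "Eh P h x n f = Eh P h' x n f"
  unfolding Eh_def
proof (rule infsum_cong)
  fix xs assume "xs \<in> paths x n"
  with mem_paths[OF this] show "path_prob P h xs * f xs = path_prob P h' xs * f xs"
    using path_prob_cong[of xs h h' P] assms by simp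
qed

context rb begin

lemma pp_nonneg: "valid h \<Longrightarrow> 0 \<le> path_prob P h xs"
  unfolding path_prob_def by (intro prod_nonneg) (auto intro: Pnn simp: valid_def)

lemma pp_has_sum: "valid h \<Longrightarrow> (path_prob P h has_sum 1) (paths x n)"
proof (induction n arbitrary: x h)
  case 0
  then show ?case unfolding paths_0 by (rule_tac has_sum_finiteI) (auto simp: path_prob_single)
next
  case (Suc n)
  define F where "F = (\<lambda>(y, ys). P (h [x]) x y * path_prob P (hs h x) ys)"
  have a: "h [x] \<le> 1" using Suc.prems by (simp add: valid_def)
  have inner: "((\<lambda>ys. F (y, ys)) has_sum P (h [x]) x y) (paths y n)" for y
    using has_sum_cmult_right[OF Suc.IH[of "hs h x" y, OF valid_hs[OF Suc.prems]], of "P (h [x]) x y"]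
    by (simp add: F_def)
  have sF: "F summable_on (SIGMA y:UNIV. paths y n)"
    by (rule summable_on_SigmaI[OF inner P_summable[OF a]])
       (auto simp: F_def intro!: mult_nonneg_nonneg Pnn[OF a] pp_nonneg valid_hs Suc.prems)
  have hF: "(F has_sum 1) (SIGMA y:UNIV. paths y n)"
    by (rule has_sum_SigmaI[OF inner Psum[OF a] sF])
  have "((path_prob P h \<circ> (\<lambda>(y, ys). x # ys)) has_sum 1) (SIGMA y:UNIV. paths y n)"
  proof (subst has_sum_cong)
    fix z :: "'x \<times> 'x list" assume "z \<in> (SIGMA y:UNIV. paths y n)"
    then obtain y ys where z: "z = (y, ys)" "ys \<in> paths y n" by auto
    show "(path_prob P h \<circ> (\<lambda>(y, ys). x # ys)) z = F z"
      using mem_paths[OF z(2)] z by (simp add: F_def path_prob_Cons)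
  qed (rule hF)
  thus ?case by (simp add: paths_Suc has_sum_reindex[OF inj_cons])
qed

lemma E_summable:
  assumes "valid h" "\<And>xs. xs \<in> paths x n \<Longrightarrow> \<bar>f xs\<bar> \<le> K"
  shows "(\<lambda>xs. path_prob P h xs * f xs) summable_on paths x n"
    and "\<bar>Eh P h x n f\<bar> \<le> K"
proof -
  have s: "(\<lambda>xs. path_prob P h xs * K) summable_on paths x n"
    using pp_has_sum[OF assms(1)] summable_on_cmult_left summable_on_def by blast
  have n: "norm (path_prob P h xs * f xs) \<le> path_prob P h xs * K" if "xs \<in> paths x n" for xs
    using pp_nonneg[OF assms(1)] assms(2)[OF that] by (simp add: abs_mult mult_left_mono)
  have as: "(\<lambda>xs. norm (path_prob P h xs * f xs)) summable_on paths x n"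
    by (rule Infinite_Sum.abs_summable_on_comparison_test'[OF s]) (rule n)
  thus "(\<lambda>xs. path_prob P h xs * f xs) summable_on paths x n"
    using summable_on_iff_abs_summable_on_real by blast
  have "norm (Eh P h x n f) \<le> infsum (\<lambda>xs. norm (path_prob P h xs * f xs)) (paths x n)"
    unfolding Eh_def by (rule norm_infsum_bound[OF as])
  also have "\<dots> \<le> infsum (\<lambda>xs. path_prob P h xs * K) (paths x n)"
    by (rule infsum_mono[OF as s]) (rule n)
  also have "\<dots> = K"
    using infsum_cmult_left'[of "path_prob P h" K "paths x n"] infsumI[OF pp_has_sum[OF assms(1)]]
    by simp
  finally show "\<bar>Eh P h x n f\<bar> \<le> K" by simp
qed

lemma E_step:
  assumes "valid h" "\<And>xs. xs \<in> paths x (Suc n) \<Longrightarrow> \<bar>f xs\<bar> \<le> K"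
  shows "Eh P h x (Suc n) f
       = infsum (\<lambda>y. P (h [x]) x y * Eh P (hs h x) y n (\<lambda>ys. f (x # ys))) UNIV"
proof -
  define F where "F = (\<lambda>xs. path_prob P h xs * f xs)"
  have sF: "F summable_on paths x (Suc n)"
    unfolding F_def by (rule E_summable(1)[OF assms])
  hence sF': "(F \<circ> (\<lambda>(y, ys). x # ys)) summable_on (SIGMA y:UNIV. paths y n)"
    by (simp add: paths_Suc summable_on_reindex[OF inj_cons])
  have "Eh P h x (Suc n) f = infsum (F \<circ> (\<lambda>(y, ys). x # ys)) (SIGMA y:UNIV. paths y n)"
    unfolding Eh_def F_def[symmetric] paths_Suc by (rule infsum_reindex[OF inj_cons])
  also have "\<dots> = infsum (\<lambda>y. infsum (\<lambda>ys. (F \<circ> (\<lambda>(y, ys). x # ys)) (y, ys)) (paths y n)) UNIV"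
    by (rule infsum_Sigma_banach[OF sF', symmetric])
  also have "\<dots> = infsum (\<lambda>y. P (h [x]) x y * Eh P (hs h x) y n (\<lambda>ys. f (x # ys))) UNIV"
  proof (rule infsum_cong)
    fix y
    have "infsum (\<lambda>ys. (F \<circ> (\<lambda>(y, ys). x # ys)) (y, ys)) (paths y n)
        = infsum (\<lambda>ys. P (h [x]) x y * (path_prob P (hs h x) ys * f (x # ys))) (paths y n)"
    proof (rule infsum_cong)
      fix ys assume "ys \<in> paths y n"
      from mem_paths[OF this] show "(F \<circ> (\<lambda>(y, ys). x # ys)) (y, ys) = P (h [x]) x y * (path_prob P (hs h x) ys * f (x # ys))"
        by (simp add: F_def path_prob_Cons)
    qed
    also have "\<dots> = P (h [x]) x y * Eh P (hs h x) y n (\<lambda>ys. f (x # ys))"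
      unfolding Eh_def by (rule infsum_cmult_right')
    finally show "infsum (\<lambda>ys. (F \<circ> (\<lambda>(y, ys). x # ys)) (y, ys)) (paths y n) = P (h [x]) x y * Eh P (hs h x) y n (\<lambda>ys. f (x # ys))" .
  qed
  finally show ?thesis .
qed

end


definition SS :: "(nat \<Rightarrow> 'x \<Rightarrow> 'x \<Rightarrow> real) \<Rightarrow> real \<Rightarrow> ('x list \<Rightarrow> nat) \<Rightarrow> 'x
   \<Rightarrow> (nat \<Rightarrow> 'x list \<Rightarrow> real) \<Rightarrow> real" where
  "SS P \<beta> h x \<phi> = (\<Sum>t. \<beta> ^ t * Eh P h x t (\<phi> t))"

lemma Jh_SS: "Jh P c \<beta> l h x = (1 - \<beta>) * SS P \<beta> h x (\<lambda>t xs. cl c l (last xs) (h xs))"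
  by (simp add: Jh_def SS_def)

lemma SS_cong_f:
  assumes "\<And>t xs. xs \<in> paths x t \<Longrightarrow> \<phi> t xs = \<phi>' t xs"
  shows "SS P \<beta> h x \<phi> = SS P \<beta> h x \<phi>'"
proof -
  have "Eh P h x t (\<phi> t) = Eh P h x t (\<phi>' t)" for t by (rule Eh_cong_f) (rule assms)
  thus ?thesis by (simp add: SS_def)
qed

lemma SS_cong_h: "(\<And>ys. ys \<noteq> [] \<Longrightarrow> hd ys = x \<Longrightarrow> h ys = h' ys) \<Longrightarrow> SS P \<beta> h x \<phi> = SS P \<beta> h' x \<phi>"
  unfolding SS_def by (subst Eh_cong_h[of x h h']) auto

lemma Jh_cong:
  assumes "\<And>ys. ys \<noteq> [] \<Longrightarrow> hd ys = x \<Longrightarrow> h ys = h' ys"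
  shows "Jh P c \<beta> l h x = Jh P c \<beta> l h' x"
proof -
  have "SS P \<beta> h x (\<lambda>t xs. cl c l (last xs) (h xs)) = SS P \<beta> h' x (\<lambda>t xs. cl c l (last xs) (h xs))"
    by (rule SS_cong_h) (rule assms)
  also have "\<dots> = SS P \<beta> h' x (\<lambda>t xs. cl c l (last xs) (h' xs))"
    by (rule SS_cong_f) (metis assms mem_paths)
  finally show ?thesis by (simp add: Jh_SS)
qed

lemma alg1: "(b::real) < 1 \<Longrightarrow> (1 - b) * (A + b * (S / (1 - b))) = (1 - b) * A + b * S"
  by (simp add: field_simps)

lemma Eh_0: "Eh P h x 0 f = f [x]"
  by (simp add: Eh_def paths_0 path_prob_single)

context rb begin

lemma geo_sum: "summable (\<lambda>t. \<beta> ^ t * K)" "(\<Sum>t. \<beta> ^ t * K) = K / (1 - \<beta>)"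
proof -
  show s: "summable (\<lambda>t. \<beta> ^ t * K)"
    using summable_geometric[of \<beta>] b0 b1 by (intro summable_mult2) auto
  have "(\<Sum>t. \<beta> ^ t * K) = (\<Sum>t. \<beta> ^ t) * K"
    using suminf_mult2[of "\<lambda>t. \<beta> ^ t" K] summable_geometric[of \<beta>] b0 b1 by auto
  also have "\<dots> = K / (1 - \<beta>)" using suminf_geometric[of \<beta>] b0 b1 by auto
  finally show "(\<Sum>t. \<beta> ^ t * K) = K / (1 - \<beta>)" .
qed

lemma SS_summ:
  assumes "valid h" "\<And>t xs. \<bar>\<phi> t xs\<bar> \<le> K"
  shows "summable (\<lambda>t. \<beta> ^ t * Eh P h x t (\<phi> t))"
    and "\<bar>SS P \<beta> h x \<phi>\<bar> \<le> K / (1 - \<beta>)"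
proof -
  have bd: "\<bar>\<beta> ^ t * Eh P h x t (\<phi> t)\<bar> \<le> \<beta> ^ t * K" for t
  proof -
    have "\<bar>Eh P h x t (\<phi> t)\<bar> \<le> K" by (rule E_summable(2)[OF assms(1)]) (rule assms(2))
    thus ?thesis using b0 by (simp add: abs_mult mult_left_mono)
  qed
  show s: "summable (\<lambda>t. \<beta> ^ t * Eh P h x t (\<phi> t))"
    by (rule summable_comparison_test'[OF geo_sum(1)]) (use bd in auto)
  have s2: "summable (\<lambda>t. - (\<beta> ^ t * K))" using geo_sum(1) summable_minus by blast
  have "SS P \<beta> h x \<phi> \<le> (\<Sum>t. \<beta> ^ t * K)"
    unfolding SS_def by (rule suminf_le[OF _ s geo_sum(1)]) (use bd abs_le_D1 in blast)
  moreover have "(\<Sum>t. - (\<beta> ^ t * K)) \<le> SS P \<beta> h x \<phi>"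
    unfolding SS_def
  proof (rule suminf_le[OF _ s2 s])
    fix n show "- (\<beta> ^ n * K) \<le> \<beta> ^ n * Eh P h x n (\<phi> n)"
      using abs_le_D2[OF bd[of n]] by linarith
  qed
  moreover have "(\<Sum>t. - (\<beta> ^ t * K)) = - (\<Sum>t. \<beta> ^ t * K)"
    using suminf_minus[OF geo_sum(1)] .
  ultimately show "\<bar>SS P \<beta> h x \<phi>\<bar> \<le> K / (1 - \<beta>)" using geo_sum(2)[of K] by auto
qed

lemma SS_step:
  assumes "valid h" "\<And>t xs. \<bar>\<phi> t xs\<bar> \<le> K"
  shows "SS P \<beta> h x \<phi> = \<phi> 0 [x]
     + \<beta> * infsum (\<lambda>y. P (h [x]) x y * SS P \<beta> (hs h x) y (\<lambda>t ys. \<phi> (Suc t) (x # ys))) UNIV"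
proof -
  have K: "0 \<le> K" using assms(2)[of 0 "[]"] by simp
  define f where "f = (\<lambda>t. \<beta> ^ t * Eh P h x t (\<phi> t))"
  have sf: "summable f" unfolding f_def by (rule SS_summ(1)[OF assms])
  define e where "e = (\<lambda>t y. Eh P (hs h x) y t (\<lambda>ys. \<phi> (Suc t) (x # ys)))"
  define p where "p = (\<lambda>y. P (h [x]) x y)"
  have a: "h [x] \<le> 1" using assms(1) by (simp add: valid_def)
  have ebd: "\<bar>e t y\<bar> \<le> K" for t y
    unfolding e_def by (rule E_summable(2)[OF valid_hs[OF assms(1)]]) (rule assms(2))
  define a where "a = (\<lambda>t y. \<beta> ^ t * (p y * e t y))"
  have fS: "f (Suc t) = \<beta> * infsum (a t) UNIV" for t
  proof -
    have "f (Suc t) = \<beta> ^ Suc t * infsum (\<lambda>y. p y * e t y) UNIV"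
      unfolding f_def p_def e_def by (subst E_step[OF assms(1)]) (rule assms(2), simp)
    also have "\<dots> = \<beta> * infsum (a t) UNIV"
      unfolding a_def by (simp add: infsum_cmult_right')
    finally show ?thesis .
  qed
  have abd: "\<bar>a n y\<bar> \<le> \<beta> ^ n * K * p y" for n y
  proof -
    have "\<bar>p y * e n y\<bar> \<le> p y * K"
      using ebd[of n y] Pnn[OF a] by (simp add: p_def abs_mult mult_left_mono)
    have "\<bar>a n y\<bar> = \<beta> ^ n * \<bar>p y * e n y\<bar>" unfolding a_def using b0 by (simp add: abs_mult)
    also have "\<dots> \<le> \<beta> ^ n * (p y * K)" using \<open>\<bar>p y * e n y\<bar> \<le> p y * K\<close> b0 by (simp add: mult_left_mono)
    finally show ?thesis by (simp add: algebra_simps)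
  qed
  have ph: "(p has_sum 1) UNIV" "\<And>y. p y \<ge> 0" using Psum[OF a] Pnn[OF a] by (auto simp: p_def)
  have sw: "(\<Sum>n. infsum (a n) UNIV) = infsum (\<lambda>y. \<Sum>n. a n y) UNIV"
    by (rule swap_sum(1)[OF ph K abd])
  have sa: "summable (\<lambda>n. infsum (a n) UNIV)"
    by (rule swap_sum(2)[OF ph K abd])
  have inner: "(\<Sum>n. a n y) = p y * SS P \<beta> (hs h x) y (\<lambda>t ys. \<phi> (Suc t) (x # ys))" for y
  proof -
    have s: "summable (\<lambda>t. \<beta> ^ t * e t y)"
      unfolding e_def by (rule SS_summ(1)[OF valid_hs[OF assms(1)]]) (rule assms(2))
    have "(\<Sum>n. a n y) = (\<Sum>n. p y * (\<beta> ^ n * e n y))"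
      unfolding a_def by (simp add: algebra_simps)
    also have "\<dots> = p y * (\<Sum>n. \<beta> ^ n * e n y)" by (rule suminf_mult[OF s])
    finally show ?thesis by (simp add: SS_def e_def)
  qed
  have "SS P \<beta> h x \<phi> = f 0 + (\<Sum>t. f (Suc t))"
    using suminf_split_head[OF sf] by (simp add: SS_def f_def)
  also have "f 0 = \<phi> 0 [x]" by (simp add: f_def Eh_0)
  also have "(\<Sum>t. f (Suc t)) = \<beta> * (\<Sum>n. infsum (a n) UNIV)"
    unfolding fS by (rule suminf_mult[OF sa])
  finally show ?thesis unfolding sw inner p_def by simp
qed

definition M :: "real \<Rightarrow> real" where "M l = Bc + \<bar>l\<bar>"

lemma cl_bd: "a \<le> 1 \<Longrightarrow> \<bar>cl c l x a\<bar> \<le> M l"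
proof -
  assume a: "a \<le> 1"
  have "a = 0 \<or> a = 1" using a by auto
  hence "\<bar>l * real a\<bar> \<le> \<bar>l\<bar>" by auto
  moreover have "\<bar>c x a + l * real a\<bar> \<le> \<bar>c x a\<bar> + \<bar>l * real a\<bar>" by (rule abs_triangle_ineq)
  ultimately show ?thesis using cbd[OF a, of x] unfolding cl_def M_def by linarith
qed

lemma J_bound: "valid h \<Longrightarrow> \<bar>Jh P c \<beta> l h x\<bar> \<le> M l"
proof -
  assume v: "valid h"
  have "\<bar>SS P \<beta> h x (\<lambda>t xs. cl c l (last xs) (h xs))\<bar> \<le> M l / (1 - \<beta>)"
    by (rule SS_summ(2)[OF v]) (rule cl_bd, use v in \<open>simp add: valid_def\<close>)
  hence "(1 - \<beta>) * \<bar>SS P \<beta> h x (\<lambda>t xs. cl c l (last xs) (h xs))\<bar> \<le> (1 - \<beta>) * (M l / (1 - \<beta>))"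
    using b1 by (intro mult_left_mono) auto
  hence "(1 - \<beta>) * \<bar>SS P \<beta> h x (\<lambda>t xs. cl c l (last xs) (h xs))\<bar> \<le> M l"
    using b1 by simp
  thus ?thesis using b1 by (simp add: Jh_SS abs_mult)
qed

lemma J_step:
  assumes v: "valid h"
  shows "Jh P c \<beta> l h x = (1 - \<beta>) * cl c l x (h [x])
     + \<beta> * infsum (\<lambda>y. P (h [x]) x y * Jh P c \<beta> l (hs h x) y) UNIV"
proof -
  have bd: "\<bar>cl c l (last xs) (h xs)\<bar> \<le> M l" for xs
    by (rule cl_bd, use v in \<open>simp add: valid_def\<close>)
  have e: "SS P \<beta> (hs h x) y (\<lambda>t ys. cl c l (last (x # ys)) (h (x # ys)))
      = SS P \<beta> (hs h x) y (\<lambda>t ys. cl c l (last ys) (hs h x ys))" for y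
  proof (rule SS_cong_f)
    fix t ys assume "ys \<in> paths y t"
    hence "ys \<noteq> []" using mem_paths by metis
    thus "cl c l (last (x # ys)) (h (x # ys)) = cl c l (last ys) (hs h x ys)" by (simp add: hs_def)
  qed
  have "Jh P c \<beta> l h x = (1 - \<beta>) * (cl c l x (h [x])
     + \<beta> * infsum (\<lambda>y. P (h [x]) x y * SS P \<beta> (hs h x) y (\<lambda>t ys. cl c l (last ys) (hs h x ys))) UNIV)"
    unfolding Jh_SS by (subst SS_step[OF v bd]) (simp only: e, simp)
  also have "infsum (\<lambda>y. P (h [x]) x y * SS P \<beta> (hs h x) y (\<lambda>t ys. cl c l (last ys) (hs h x ys))) UNIV
     = infsum (\<lambda>y. P (h [x]) x y * Jh P c \<beta> l (hs h x) y) UNIV / (1 - \<beta>)"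
  proof -
    have "infsum (\<lambda>y. P (h [x]) x y * Jh P c \<beta> l (hs h x) y) UNIV
        = infsum (\<lambda>y. (1 - \<beta>) * (P (h [x]) x y * SS P \<beta> (hs h x) y (\<lambda>t ys. cl c l (last ys) (hs h x ys)))) UNIV"
      by (simp add: Jh_SS algebra_simps)
    also have "\<dots> = (1 - \<beta>) * infsum (\<lambda>y. P (h [x]) x y * SS P \<beta> (hs h x) y (\<lambda>t ys. cl c l (last ys) (hs h x ys))) UNIV"
      by (rule infsum_cmult_right')
    finally show ?thesis using b1 by simp
  qed
  finally show ?thesis using alg1[OF b1] by simp
qed

end


lemma min_lip: "\<bar>a - c\<bar> \<le> e \<Longrightarrow> \<bar>b - d\<bar> \<le> e \<Longrightarrow> \<bar>min a b - min c d\<bar> \<le> (e::real)"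
  unfolding min_def abs_le_iff by auto

context rb begin

definition Top :: "real \<Rightarrow> ('x \<Rightarrow> real) \<Rightarrow> 'x \<Rightarrow> real" where
  "Top l V x = min (Hop P c \<beta> l V x 0) (Hop P c \<beta> l V x 1)"

lemma Hop_diff:
  assumes a: "a \<le> 1" and "\<And>y. \<bar>V y\<bar> \<le> K1" "\<And>y. \<bar>U y\<bar> \<le> K2" "\<And>y. \<bar>V y - U y\<bar> \<le> D"
  shows "\<bar>Hop P c \<beta> l V x a - Hop P c \<beta> l U x a\<bar> \<le> \<beta> * D"
proof -
  have "Hop P c \<beta> l V x a - Hop P c \<beta> l U x a
      = \<beta> * (infsum (\<lambda>y. P a x y * V y) UNIV - infsum (\<lambda>y. P a x y * U y) UNIV)"
    by (simp add: Hop_def algebra_simps)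
  also have "\<dots> = \<beta> * infsum (\<lambda>y. P a x y * (V y - U y)) UNIV"
    using PV_diff[OF a assms(2,3)] by simp
  finally have e: "Hop P c \<beta> l V x a - Hop P c \<beta> l U x a = \<beta> * infsum (\<lambda>y. P a x y * (V y - U y)) UNIV" .
  have "\<bar>infsum (\<lambda>y. P a x y * (V y - U y)) UNIV\<bar> \<le> D"
    by (rule PV_bound[OF a]) (rule assms(4))
  thus ?thesis unfolding e using b0 by (simp add: abs_mult mult_left_mono)
qed

lemma Hop_bd:
  assumes a: "a \<le> 1" and V: "\<And>y. \<bar>V y\<bar> \<le> M l"
  shows "\<bar>Hop P c \<beta> l V x a\<bar> \<le> M l"
proof -
  have "\<bar>infsum (\<lambda>y. P a x y * V y) UNIV\<bar> \<le> M l" by (rule PV_bound[OF a V])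
  hence 1: "\<bar>\<beta> * infsum (\<lambda>y. P a x y * V y) UNIV\<bar> \<le> \<beta> * M l"
    using b0 by (simp add: abs_mult mult_left_mono)
  have "\<bar>(1 - \<beta>) * cl c l x a\<bar> \<le> (1 - \<beta>) * M l"
    using cl_bd[OF a, of l x] b1 by (simp add: abs_mult mult_left_mono)
  moreover have "\<bar>Hop P c \<beta> l V x a\<bar> \<le> \<bar>(1 - \<beta>) * cl c l x a\<bar> + \<bar>\<beta> * infsum (\<lambda>y. P a x y * V y) UNIV\<bar>"
    unfolding Hop_def by (rule abs_triangle_ineq)
  ultimately show ?thesis using 1 by (simp add: algebra_simps)
qed

lemma Top_diff:
  assumes "\<And>y. \<bar>V y\<bar> \<le> K1" "\<And>y. \<bar>U y\<bar> \<le> K2" "\<And>y. \<bar>V y - U y\<bar> \<le> D"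
  shows "\<bar>Top l V x - Top l U x\<bar> \<le> \<beta> * D"
  unfolding Top_def by (rule min_lip; rule Hop_diff[OF _ assms]; simp)

lemma Top_bd: "(\<And>y. \<bar>V y\<bar> \<le> M l) \<Longrightarrow> \<bar>Top l V x\<bar> \<le> M l"
  unfolding Top_def using Hop_bd[of 0 V l x] Hop_bd[of 1 V l x] by (simp add: abs_le_iff min_def)

lemma M_nn: "0 \<le> M l" using Bc_nn by (simp add: M_def)

definition Vs :: "real \<Rightarrow> nat \<Rightarrow> 'x \<Rightarrow> real" where
  "Vs l n = (Top l ^^ n) (\<lambda>_. 0)"

lemma Vs_Suc: "Vs l (Suc n) = Top l (Vs l n)"
  by (simp add: Vs_def)

lemma Vs_bd: "\<bar>Vs l n x\<bar> \<le> M l"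
proof (induction n arbitrary: x)
  case 0 then show ?case using M_nn by (simp add: Vs_def)
next
  case (Suc n) then show ?case unfolding Vs_Suc by (rule Top_bd)
qed

lemma Vs_cauchy: "\<bar>Vs l (n + k) x - Vs l n x\<bar> \<le> \<beta> ^ n * (2 * M l)"
proof (induction n arbitrary: x)
  case 0
  have "\<bar>Vs l k x - Vs l 0 x\<bar> \<le> \<bar>Vs l k x\<bar> + \<bar>Vs l 0 x\<bar>" by (rule abs_triangle_ineq4)
  then show ?case using Vs_bd[of l k x] Vs_bd[of l 0 x] by simp
next
  case (Suc n)
  have "\<bar>Top l (Vs l (n + k)) x - Top l (Vs l n) x\<bar> \<le> \<beta> * (\<beta> ^ n * (2 * M l))"
    by (rule Top_diff[OF Vs_bd Vs_bd Suc.IH])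
  then show ?case by (simp add: Vs_Suc)
qed

lemma pow_small:
  assumes "0 < e"
  shows "\<exists>N. \<forall>n\<ge>N. \<beta> ^ n * K < e"
proof -
  have "(\<lambda>n. \<beta> ^ n * K) \<longlonglongrightarrow> 0 * K"
    by (intro tendsto_mult LIMSEQ_power_zero) (use b0 b1 in auto)
  hence "eventually (\<lambda>n. \<beta> ^ n * K < e) sequentially"
    using order_tendstoD(2)[of _ 0 sequentially e] assms by simp
  thus ?thesis by (simp add: eventually_sequentially)
qed

lemma V_exists: "\<exists>W. (\<forall>x. \<bar>W x\<bar> \<le> M l) \<and> (\<forall>x. W x = Top l W x)"
proof -
  have cv: "convergent (\<lambda>n. Vs l n x)" for x
  proof -
    have "Cauchy (\<lambda>n. Vs l n x)"
    proof (rule CauchyI)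
      fix e :: real assume e: "0 < e"
      obtain N where N: "\<forall>n\<ge>N. \<beta> ^ n * (2 * M l) < e" using pow_small[OF e] by blast
      show "\<exists>N. \<forall>m\<ge>N. \<forall>n\<ge>N. norm (Vs l m x - Vs l n x) < e"
      proof (intro exI allI impI)
        fix m n assume mn: "N \<le> m" "N \<le> n"
        have pm: "\<beta> ^ N * (2 * M l) \<ge> \<beta> ^ min m n * (2 * M l)"
          using mn b0 b1 M_nn by (intro mult_right_mono power_decreasing) auto
        have "\<bar>Vs l m x - Vs l n x\<bar> \<le> \<beta> ^ min m n * (2 * M l)"
        proof (cases "m \<le> n")
          case True
          then show ?thesis using Vs_cauchy[of l m "n - m" x] by (simp add: abs_minus_commute min_def)
        next
          case False
          then show ?thesis using Vs_cauchy[of l n "m - n" x] by (simp add: min_def)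
        qed
        thus "norm (Vs l m x - Vs l n x) < e" using pm N mn by auto
      qed
    qed
    thus ?thesis by (simp add: Cauchy_convergent_iff)
  qed
  define W where "W x = lim (\<lambda>n. Vs l n x)" for x
  have lim: "(\<lambda>n. Vs l n x) \<longlonglongrightarrow> W x" for x
    using cv convergent_LIMSEQ_iff W_def by metis
  have Wbd: "\<bar>W x\<bar> \<le> M l" for x
    by (rule LIMSEQ_le_const2[OF tendsto_rabs[OF lim]]) (use Vs_bd in auto)
  have cl: "\<bar>W x - Vs l n x\<bar> \<le> \<beta> ^ n * (2 * M l)" for n x
  proof -
    have "(\<lambda>k. \<bar>Vs l (k + n) x - Vs l n x\<bar>) \<longlonglongrightarrow> \<bar>W x - Vs l n x\<bar>"
      by (intro tendsto_rabs tendsto_diff LIMSEQ_ignore_initial_segment[OF lim] tendsto_const)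
    thus ?thesis by (rule LIMSEQ_le_const2) (use Vs_cauchy[of l n _ x] in \<open>auto simp: add.commute\<close>)
  qed
  have fpt: "W x = Top l W x" for x
  proof -
    have "\<bar>Top l W x - W x\<bar> \<le> \<beta> ^ n * (4 * M l)" for n
    proof -
      have 1: "\<bar>Top l W x - Top l (Vs l n) x\<bar> \<le> \<beta> * (\<beta> ^ n * (2 * M l))"
        by (rule Top_diff[OF Wbd Vs_bd cl])
      have 2: "\<bar>Vs l (Suc n) x - W x\<bar> \<le> \<beta> ^ Suc n * (2 * M l)"
        using cl[of x "Suc n"] by (simp add: abs_minus_commute)
      have "\<bar>Top l W x - W x\<bar> \<le> \<bar>Top l W x - Top l (Vs l n) x\<bar> + \<bar>Vs l (Suc n) x - W x\<bar>"
        unfolding Vs_Suc using abs_triangle_ineq[of "Top l W x - Top l (Vs l n) x" "Top l (Vs l n) x - W x"] by simp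
      also have "\<dots> \<le> \<beta> * (\<beta> ^ n * (2 * M l)) + \<beta> ^ Suc n * (2 * M l)" using 1 2 by linarith
      also have "\<dots> = \<beta> ^ n * (4 * M l) * \<beta>" by (simp add: algebra_simps)
      also have "\<dots> \<le> \<beta> ^ n * (4 * M l)"
        using b0 b1 M_nn by (intro mult_left_le) auto
      finally show ?thesis .
    qed
    thus ?thesis using zero_by_pow[OF b0 b1] by fastforce
  qed
  show ?thesis using Wbd fpt by blast
qed

lemma V_unique:
  assumes "\<And>x. \<bar>U1 x\<bar> \<le> K1" "\<And>x. U1 x = Top l U1 x"
      and "\<And>x. \<bar>U2 x\<bar> \<le> K2" "\<And>x. U2 x = Top l U2 x"
  shows "U1 = U2"
proof -
  have "\<bar>U1 x - U2 x\<bar> \<le> \<beta> ^ n * (K1 + K2)" for n x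
  proof (induction n arbitrary: x)
    case 0
    have "\<bar>U1 x - U2 x\<bar> \<le> \<bar>U1 x\<bar> + \<bar>U2 x\<bar>" by (rule abs_triangle_ineq4)
    then show ?case using assms(1)[of x] assms(3)[of x] by simp
  next
    case (Suc n)
    have "\<bar>Top l U1 x - Top l U2 x\<bar> \<le> \<beta> * (\<beta> ^ n * (K1 + K2))"
      by (rule Top_diff[OF assms(1,3) Suc.IH])
    then show ?case using assms(2)[of x] assms(4)[of x] by simp
  qed
  hence "U1 x = U2 x" for x using zero_by_pow[OF b0 b1] by (metis diff_eq_eq add.commute add_0)
  thus ?thesis by auto
qed

lemma Vf_props: "(\<forall>x. \<bar>Vf P c \<beta> l x\<bar> \<le> M l) \<and> (\<forall>x. Vf P c \<beta> l x = Top l (Vf P c \<beta> l) x)"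
proof -
  obtain W where W: "\<forall>x. \<bar>W x\<bar> \<le> M l" "\<forall>x. W x = Top l W x" using V_exists by blast
  have ex: "\<exists>!V. (\<exists>B. \<forall>x. \<bar>V x\<bar> \<le> B) \<and> (\<forall>x. V x = min (Hop P c \<beta> l V x 0) (Hop P c \<beta> l V x 1))"
  proof (rule ex1I[of _ W])
    show "(\<exists>B. \<forall>x. \<bar>W x\<bar> \<le> B) \<and> (\<forall>x. W x = min (Hop P c \<beta> l W x 0) (Hop P c \<beta> l W x 1))"
      using W unfolding Top_def by blast
  next
    fix V assume "(\<exists>B. \<forall>x. \<bar>V x\<bar> \<le> B) \<and> (\<forall>x. V x = min (Hop P c \<beta> l V x 0) (Hop P c \<beta> l V x 1))"
    then obtain B where "\<forall>x. \<bar>V x\<bar> \<le> B" "\<forall>x. V x = Top l V x" unfolding Top_def by blast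
    thus "V = W" using V_unique[of V B l W "M l"] W by blast
  qed
  have "Vf P c \<beta> l = W"
    unfolding Vf_def
  proof (rule the1_equality[OF ex])
    show "(\<exists>B. \<forall>x. \<bar>W x\<bar> \<le> B) \<and> (\<forall>x. W x = min (Hop P c \<beta> l W x 0) (Hop P c \<beta> l W x 1))"
      using W unfolding Top_def by blast
  qed
  thus ?thesis using W by simp
qed

lemma V_bd: "\<bar>Vf P c \<beta> l x\<bar> \<le> M l" using Vf_props by blast

lemma V_eq: "Vf P c \<beta> l x = min (Hf P c \<beta> l x 0) (Hf P c \<beta> l x 1)"
  using Vf_props unfolding Top_def Hf_def by blast

end


lemma contr_zero:
  fixes D :: "'a \<Rightarrow> real" and \<beta> :: real
  assumes b: "0 < \<beta>" "\<beta> < 1"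
    and K: "\<And>a. a \<in> S \<Longrightarrow> \<bar>D a\<bar> \<le> K"
    and st: "\<And>K' a. (\<And>b. b \<in> S \<Longrightarrow> \<bar>D b\<bar> \<le> K') \<Longrightarrow> a \<in> S \<Longrightarrow> \<bar>D a\<bar> \<le> \<beta> * K'"
    and a: "a \<in> S"
  shows "D a = 0"
proof -
  have "\<forall>a\<in>S. \<bar>D a\<bar> \<le> \<beta> ^ n * K" for n
  proof (induction n)
    case 0 then show ?case using K by simp
  next
    case (Suc n)
    then show ?case using st[of "\<beta> ^ n * K"] by (simp add: mult.assoc)
  qed
  thus ?thesis using zero_by_pow[OF b] a by blast
qed

lemma contr_nonneg:
  fixes D :: "'a \<Rightarrow> real" and \<beta> :: real
  assumes b: "0 < \<beta>" "\<beta> < 1"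
    and K: "\<And>a. a \<in> S \<Longrightarrow> D a \<ge> - K"
    and st: "\<And>K' a. (\<And>b. b \<in> S \<Longrightarrow> D b \<ge> - K') \<Longrightarrow> a \<in> S \<Longrightarrow> D a \<ge> - (\<beta> * K')"
    and a: "a \<in> S"
  shows "D a \<ge> 0"
proof -
  have "\<forall>a\<in>S. D a \<ge> - (\<beta> ^ n * K)" for n
  proof (induction n)
    case 0 then show ?case using K by simp
  next
    case (Suc n)
    then show ?case using st[of "\<beta> ^ n * K"] by (simp add: mult.assoc)
  qed
  hence le: "- (\<beta> ^ n * K) \<le> D a" for n using a by blast
  have "(\<lambda>n. - (\<beta> ^ n * K)) \<longlonglongrightarrow> - (0 * K)"
    by (intro tendsto_minus tendsto_mult LIMSEQ_power_zero) (use b in auto)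
  hence "0 \<le> D a" using LIMSEQ_le_const2[of "\<lambda>n. - (\<beta> ^ n * K)" 0 "D a"] le by auto
  thus ?thesis .
qed

context rb begin

definition G :: "real \<Rightarrow> 'x list \<Rightarrow> nat" where
  "G l = (\<lambda>xs. gf P c \<beta> l (last xs))"

lemma gf_le: "gf P c \<beta> l x \<le> 1" by (simp add: gf_def)

lemma valid_G: "valid (G l)" by (simp add: valid_def G_def gf_def)

lemma V_Hg: "Vf P c \<beta> l x = Hf P c \<beta> l x (gf P c \<beta> l x)"
  using V_eq[of l x] by (simp add: gf_def min_def)

lemma Hf_expand: "Hf P c \<beta> l x a = (1 - \<beta>) * cl c l x a + \<beta> * infsum (\<lambda>y. P a x y * Vf P c \<beta> l y) UNIV"
  by (simp add: Hf_def Hop_def)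

lemma J_G: "Jh P c \<beta> l (G l) x = Vf P c \<beta> l x"
proof -
  define D where "D x = Jh P c \<beta> l (G l) x - Vf P c \<beta> l x" for x
  have Dbd: "\<bar>D x\<bar> \<le> 2 * M l" for x
  proof -
    have "\<bar>D x\<bar> \<le> \<bar>Jh P c \<beta> l (G l) x\<bar> + \<bar>Vf P c \<beta> l x\<bar>" unfolding D_def by (rule abs_triangle_ineq4)
    thus ?thesis using J_bound[where h="G l" and l=l and x=x, OF valid_G] V_bd[of l x] by simp
  qed
  have rec: "D x = \<beta> * infsum (\<lambda>y. P (gf P c \<beta> l x) x y * D y) UNIV" for x
  proof -
    let ?a = "gf P c \<beta> l x"
    have a: "?a \<le> 1" by (rule gf_le)
    have hsG: "Jh P c \<beta> l (hs (G l) x) y = Jh P c \<beta> l (G l) y" for y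
      by (rule Jh_cong) (simp add: hs_def G_def)
    have J: "Jh P c \<beta> l (G l) x = (1 - \<beta>) * cl c l x ?a + \<beta> * infsum (\<lambda>y. P ?a x y * Jh P c \<beta> l (G l) y) UNIV"
      using J_step[where h="G l" and l=l and x=x, OF valid_G] unfolding hsG by (simp add: G_def)
    have V: "Vf P c \<beta> l x = (1 - \<beta>) * cl c l x ?a + \<beta> * infsum (\<lambda>y. P ?a x y * Vf P c \<beta> l y) UNIV"
      using V_Hg[of l x] Hf_expand[of l x ?a] by simp
    have "D x = \<beta> * (infsum (\<lambda>y. P ?a x y * Jh P c \<beta> l (G l) y) UNIV - infsum (\<lambda>y. P ?a x y * Vf P c \<beta> l y) UNIV)"
      unfolding D_def J V by (simp add: algebra_simps)
    also have "\<dots> = \<beta> * infsum (\<lambda>y. P ?a x y * D y) UNIV"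
      unfolding D_def by (subst PV_diff[OF a J_bound[OF valid_G] V_bd]) simp
    finally show ?thesis .
  qed
  have "D x = 0"
  proof (rule contr_zero[OF b0 b1, where S=UNIV and K="2 * M l" and D=D and a=x])
    show "\<And>a. a \<in> UNIV \<Longrightarrow> \<bar>D a\<bar> \<le> 2 * M l" by (rule Dbd)
  next
    fix K' a assume h: "\<And>b. b \<in> UNIV \<Longrightarrow> \<bar>D b\<bar> \<le> K'"
    have "\<bar>infsum (\<lambda>y. P (gf P c \<beta> l a) a y * D y) UNIV\<bar> \<le> K'"
      by (rule PV_bound[OF gf_le]) (use h in simp)
    thus "\<bar>D a\<bar> \<le> \<beta> * K'" using b0 by (subst rec) (simp add: abs_mult mult_left_mono)
  qed simp
  thus ?thesis by (simp add: D_def)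
qed

lemma V_le_H: "a \<le> 1 \<Longrightarrow> Vf P c \<beta> l x \<le> Hf P c \<beta> l x a"
  using V_eq[of l x] by (cases a) auto

lemma optimal:
  assumes v: "valid h"
  shows "Vf P c \<beta> l x \<le> Jh P c \<beta> l h x"
proof -
  define D where "D = (\<lambda>(h, x). Jh P c \<beta> l h x - Vf P c \<beta> l x)"
  have "D (h, x) \<ge> 0"
  proof (rule contr_nonneg[OF b0 b1, where S="{(h, x). valid h}" and K="2 * M l" and D=D and a="(h, x)"])
    fix a :: "('x list \<Rightarrow> nat) \<times> 'x" assume "a \<in> {(h, x). valid h}"
    then obtain h x where a: "a = (h, x)" "valid h" by auto
    have "\<bar>Jh P c \<beta> l h x - Vf P c \<beta> l x\<bar> \<le> \<bar>Jh P c \<beta> l h x\<bar> + \<bar>Vf P c \<beta> l x\<bar>" by (rule abs_triangle_ineq4)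
    thus "D a \<ge> - (2 * M l)" using J_bound[OF a(2), of l x] V_bd[of l x] a by (simp add: D_def)
  next
    fix K' and a :: "('x list \<Rightarrow> nat) \<times> 'x"
    assume h: "\<And>b. b \<in> {(h, x). valid h} \<Longrightarrow> D b \<ge> - K'" and "a \<in> {(h, x). valid h}"
    then obtain h x where a: "a = (h, x)" "valid h" by auto
    let ?a = "h [x]"
    have aa: "?a \<le> 1" using a(2) by (simp add: valid_def)
    have "Vf P c \<beta> l x \<le> (1 - \<beta>) * cl c l x ?a + \<beta> * infsum (\<lambda>y. P ?a x y * Vf P c \<beta> l y) UNIV"
      using V_le_H[OF aa, of l x] Hf_expand by simp
    hence "D a \<ge> \<beta> * (infsum (\<lambda>y. P ?a x y * Jh P c \<beta> l (hs h x) y) UNIV - infsum (\<lambda>y. P ?a x y * Vf P c \<beta> l y) UNIV)"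
      unfolding D_def a(1) using J_step[OF a(2), of l x] by (simp add: algebra_simps)
    also have "infsum (\<lambda>y. P ?a x y * Jh P c \<beta> l (hs h x) y) UNIV - infsum (\<lambda>y. P ?a x y * Vf P c \<beta> l y) UNIV
        = infsum (\<lambda>y. P ?a x y * (Jh P c \<beta> l (hs h x) y - Vf P c \<beta> l y)) UNIV"
      by (rule PV_diff[OF aa J_bound[OF valid_hs[OF a(2)]] V_bd])
    finally have 1: "D a \<ge> \<beta> * infsum (\<lambda>y. P ?a x y * (Jh P c \<beta> l (hs h x) y - Vf P c \<beta> l y)) UNIV" .
    have bd: "\<bar>Jh P c \<beta> l (hs h x) y - Vf P c \<beta> l y\<bar> \<le> 2 * M l" for y
    proof -
      have "\<bar>Jh P c \<beta> l (hs h x) y - Vf P c \<beta> l y\<bar> \<le> \<bar>Jh P c \<beta> l (hs h x) y\<bar> + \<bar>Vf P c \<beta> l y\<bar>" by (rule abs_triangle_ineq4)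
      thus ?thesis using J_bound[OF valid_hs[OF a(2)], of l x y] V_bd[of l y] by simp
    qed
    have "infsum (\<lambda>y. P ?a x y * (Jh P c \<beta> l (hs h x) y - Vf P c \<beta> l y)) UNIV \<ge> - K'"
    proof (rule PV_lower[OF aa _ bd])
      fix y show "Jh P c \<beta> l (hs h x) y - Vf P c \<beta> l y \<ge> - K'"
        using h[of "(hs h x, y)"] valid_hs[OF a(2)] by (simp add: D_def)
    qed
    hence "\<beta> * infsum (\<lambda>y. P ?a x y * (Jh P c \<beta> l (hs h x) y - Vf P c \<beta> l y)) UNIV \<ge> \<beta> * (- K')"
      using b0 by (intro mult_left_mono) auto
    thus "D a \<ge> - (\<beta> * K')" using 1 by simp
  qed (use v in simp)
  thus ?thesis by (simp add: D_def)
qed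

definition h0 :: "real \<Rightarrow> 'x list \<Rightarrow> nat" where "h0 l = h_stop P c \<beta> l (\<lambda>_. 0)"

lemma valid_hstop: "valid (h_stop P c \<beta> l \<sigma>)"
  by (simp add: valid_def h_stop_def gf_def)

lemma ext_single: "ext [x] = (\<lambda>_. x)"
  by (simp add: ext_def fun_eq_iff)

lemma J_h0: "Jh P c \<beta> l (h0 l) x = Hf P c \<beta> l x 1"
proof -
  have h0x: "h0 l [x] = 1" by (simp add: h0_def h_stop_def zero_enat_def)
  have hs0: "Jh P c \<beta> l (hs (h0 l) x) y = Jh P c \<beta> l (G l) y" for y
    by (rule Jh_cong) (simp add: h0_def hs_def h_stop_def G_def zero_enat_def)
  show ?thesis using J_step[where h="h0 l" and l=l and x=x, OF valid_hstop[of l "\<lambda>_. 0", folded h0_def]]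
    by (simp add: h0x hs0 J_G Hf_expand)
qed

lemma H1_W: "Hf P c \<beta> l x 1 = (1 - \<beta>) * c x 1 + Wf P c \<beta> l x"
  by (simp add: Hf_expand Wf_def cl_def algebra_simps)

definition sg :: "real \<Rightarrow> (nat \<Rightarrow> 'x) \<Rightarrow> enat" where
  "sg l \<omega> = (if \<exists>t\<ge>1. gf P c \<beta> l (\<omega> t) = 1 then enat (LEAST t. 1 \<le> t \<and> gf P c \<beta> l (\<omega> t) = 1) else \<infinity>)"

lemma sg_char: "sg l \<omega> = enat n \<longleftrightarrow> (1 \<le> n \<and> gf P c \<beta> l (\<omega> n) = 1 \<and> (\<forall>t. 1 \<le> t \<and> t < n \<longrightarrow> gf P c \<beta> l (\<omega> t) \<noteq> 1))"
  (is "?L \<longleftrightarrow> ?R")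
proof
  assume L: ?L
  hence ex: "\<exists>t\<ge>1. gf P c \<beta> l (\<omega> t) = 1" by (auto simp: sg_def split: if_splits)
  hence n: "n = (LEAST t. 1 \<le> t \<and> gf P c \<beta> l (\<omega> t) = 1)" using L by (simp add: sg_def)
  have "1 \<le> n \<and> gf P c \<beta> l (\<omega> n) = 1" unfolding n by (rule LeastI_ex) (use ex in auto)
  moreover have "\<forall>t. 1 \<le> t \<and> t < n \<longrightarrow> gf P c \<beta> l (\<omega> t) \<noteq> 1"
    unfolding n using not_less_Least by blast
  ultimately show ?R by blast
next
  assume R: ?R
  hence ex: "\<exists>t\<ge>1. gf P c \<beta> l (\<omega> t) = 1" by blast
  have "(LEAST t. 1 \<le> t \<and> gf P c \<beta> l (\<omega> t) = 1) = n"
    by (rule Least_equality) (use R not_less in auto)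
  thus ?L using ex by (simp add: sg_def)
qed

lemma sg_stopping: "stopping_time (sg l)"
  unfolding stopping_time_def
proof (intro allI impI)
  fix n and \<omega> \<omega>' :: "nat \<Rightarrow> 'x" assume h: "\<forall>i\<le>n. \<omega> i = \<omega>' i"
  show "(sg l \<omega> = enat n) = (sg l \<omega>' = enat n)"
    unfolding sg_char using h by (metis less_imp_le_nat order_refl)
qed

lemma sg_nz: "sg l \<omega> \<noteq> 0"
  using sg_char[of l \<omega> 0] by (simp add: zero_enat_def)

lemma sg_nonzero_fun: "sg l \<noteq> (\<lambda>_. 0)"
  using sg_nz by (metis)

lemma ext_Cons_last: "ys \<noteq> [] \<Longrightarrow> ext (x # ys) (length ys) = last ys"
  by (simp add: ext_def last_conv_nth)

lemma gf_cases: "gf P c \<beta> l x \<noteq> 1 \<Longrightarrow> gf P c \<beta> l x = 0"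
  by (simp add: gf_def split: if_splits)

lemma J_sg: "Jh P c \<beta> l (h_stop P c \<beta> l (sg l)) x = Hf P c \<beta> l x 0"
proof -
  have hx: "h_stop P c \<beta> l (sg l) [x] = 0"
    using sg_nz[of l "ext [x]"] by (simp add: h_stop_def zero_enat_def[symmetric] ext_single)
  have hsx: "hs (h_stop P c \<beta> l (sg l)) x ys = G l ys" if ys: "ys \<noteq> []" for ys
  proof -
    define \<omega> where "\<omega> = ext (x # ys)"
    define m where "m = length ys"
    have wm: "\<omega> m = last ys" unfolding \<omega>_def m_def by (rule ext_Cons_last[OF ys])
    have lm: "length (x # ys) - 1 = m" by (simp add: m_def)
    have lst: "last (x # ys) = last ys" using ys by simp
    show ?thesis
    proof (cases "enat m < sg l \<omega>")
      case True
      have "gf P c \<beta> l (\<omega> m) \<noteq> 1"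
      proof
        assume g1: "gf P c \<beta> l (\<omega> m) = 1"
        have m1: "1 \<le> m" using ys by (simp add: m_def Suc_le_eq)
        hence ex: "\<exists>t\<ge>1. gf P c \<beta> l (\<omega> t) = 1" using g1 by blast
        have "(LEAST t. 1 \<le> t \<and> gf P c \<beta> l (\<omega> t) = 1) \<le> m" by (rule Least_le) (use g1 m1 in auto)
        hence "sg l \<omega> \<le> enat m" using ex by (simp add: sg_def)
        thus False using True by simp
      qed
      hence "gf P c \<beta> l (last ys) = 0" using gf_cases wm by simp
      then show ?thesis using True by (simp add: hs_def h_stop_def G_def lm \<omega>_def[symmetric] lst ys m_def[symmetric])
    next
      case False
      show ?thesis
      proof (cases "sg l \<omega> = enat m")
        case True
        hence "gf P c \<beta> l (\<omega> m) = 1" using sg_char by blast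
        then show ?thesis using True by (simp add: hs_def h_stop_def G_def lm \<omega>_def[symmetric] lst ys m_def[symmetric] wm)
      next
        case F2: False
        show ?thesis using False F2 by (simp add: hs_def h_stop_def G_def lm \<omega>_def[symmetric] lst ys m_def[symmetric])
      qed
    qed
  qed
  have hs0: "Jh P c \<beta> l (hs (h_stop P c \<beta> l (sg l)) x) y = Jh P c \<beta> l (G l) y" for y
    by (rule Jh_cong) (simp add: hsx)
  show ?thesis using J_step[where h="h_stop P c \<beta> l (sg l)" and l=l and x=x, OF valid_hstop]
    by (simp add: hx hs0 J_G Hf_expand)
qed

end


definition shift :: "'x \<Rightarrow> (nat \<Rightarrow> 'x) \<Rightarrow> nat \<Rightarrow> 'x" where
  "shift x \<omega> i = (case i of 0 \<Rightarrow> x | Suc j \<Rightarrow> \<omega> j)"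

definition sx :: "((nat \<Rightarrow> 'x) \<Rightarrow> enat) \<Rightarrow> 'x \<Rightarrow> (nat \<Rightarrow> 'x) \<Rightarrow> enat" where
  "sx \<sigma> x \<omega> = \<sigma> (shift x \<omega>) - 1"

lemma ext_Cons: "ys \<noteq> [] \<Longrightarrow> ext (x # ys) = shift x (ext ys)"
proof
  fix i assume ys: "ys \<noteq> []"
  then obtain m where m: "length ys = Suc m" by (cases ys) auto
  show "ext (x # ys) i = shift x (ext ys) i"
  proof (cases i)
    case 0 then show ?thesis by (simp add: ext_def shift_def)
  next
    case (Suc j)
    have "min (Suc j) (Suc m) = Suc (min j m)" by simp
    then show ?thesis using Suc m by (simp add: ext_def shift_def)
  qed
qed

lemma enat_m1: "(s - 1 = enat n) \<longleftrightarrow> (s = enat (Suc n) \<or> (n = 0 \<and> s = 0))"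
  by (cases s) (auto simp: one_enat_def zero_enat_def)

lemma enat_shift: "s \<noteq> 0 \<Longrightarrow> (enat (Suc t) < s \<longleftrightarrow> enat t < s - 1) \<and> (s = enat (Suc t) \<longleftrightarrow> s - 1 = enat t)"
  by (cases s) (auto simp: one_enat_def zero_enat_def)

lemma stopping_sx:
  fixes \<sigma> :: "(nat \<Rightarrow> 'x) \<Rightarrow> enat"
  assumes st: "stopping_time \<sigma>"
  shows "stopping_time (sx \<sigma> x)"
  unfolding stopping_time_def
proof (intro allI impI)
  fix n and \<omega> \<omega>' :: "nat \<Rightarrow> 'x" assume h: "\<forall>i\<le>n. \<omega> i = \<omega>' i"
  have h': "\<forall>i\<le>Suc n. shift x \<omega> i = shift x \<omega>' i"
    using h by (auto simp: shift_def split: nat.splits)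
  have e1: "\<sigma> (shift x \<omega>) = enat (Suc n) \<longleftrightarrow> \<sigma> (shift x \<omega>') = enat (Suc n)"
    using st h' unfolding stopping_time_def by blast
  have h0: "\<forall>i\<le>0. shift x \<omega> i = shift x \<omega>' i" by (simp add: shift_def)
  have e0: "\<sigma> (shift x \<omega>) = enat 0 \<longleftrightarrow> \<sigma> (shift x \<omega>') = enat 0"
    using st h0 unfolding stopping_time_def by blast
  show "(sx \<sigma> x \<omega> = enat n) = (sx \<sigma> x \<omega>' = enat n)"
    unfolding sx_def enat_m1 using e1 e0 by (simp add: zero_enat_def)
qed

lemma stop_zero_same:
  assumes "stopping_time \<sigma>" "\<omega> 0 = \<omega>' 0"
  shows "\<sigma> \<omega> = 0 \<longleftrightarrow> \<sigma> \<omega>' = 0"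
  using assms unfolding stopping_time_def zero_enat_def by (metis le_zero_eq)

lemma ext_0: "xs \<noteq> [] \<Longrightarrow> ext xs 0 = hd xs"
  by (simp add: ext_def hd_conv_nth)

lemma SS_zero:
  assumes "\<And>t xs. xs \<in> paths y t \<Longrightarrow> \<phi> t xs = 0"
  shows "SS P \<beta> h y \<phi> = 0"
proof -
  have "SS P \<beta> h y \<phi> = SS P \<beta> h y (\<lambda>_ _. 0)" by (rule SS_cong_f) (rule assms)
  thus ?thesis by (simp add: SS_def Eh_def)
qed

lemma hs_passive: "hs passive_pol x = passive_pol"
  by (simp add: hs_def passive_pol_def fun_eq_iff)

definition phi1 :: "('x \<Rightarrow> nat \<Rightarrow> real) \<Rightarrow> ((nat \<Rightarrow> 'x) \<Rightarrow> enat) \<Rightarrow> nat \<Rightarrow> 'x list \<Rightarrow> real" where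
  "phi1 c \<sigma> t xs = (if enat t < \<sigma> (ext xs) then c (last xs) 0 else 0)"
definition phi2 :: "('x \<Rightarrow> real) \<Rightarrow> ((nat \<Rightarrow> 'x) \<Rightarrow> enat) \<Rightarrow> nat \<Rightarrow> 'x list \<Rightarrow> real" where
  "phi2 f \<sigma> t xs = (if \<sigma> (ext xs) = enat t then f (last xs) else 0)"

lemma Lf_SS: "Lf P c \<beta> x \<sigma> = SS P \<beta> passive_pol x (phi1 c \<sigma>) + SS P \<beta> passive_pol x (phi2 (\<lambda>y. c y 1) \<sigma>)"
  unfolding Lf_def SS_def phi1_def[abs_def] phi2_def[abs_def] by (rule refl)

lemma Estop_SS: "Estop P \<beta> x \<sigma> f = SS P \<beta> passive_pol x (phi2 f \<sigma>)"
  by (simp add: Estop_def SS_def phi2_def[abs_def])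

lemma phi1_shift:
  assumes "\<sigma> (shift x (ext ys)) \<noteq> 0" "ys \<noteq> []"
  shows "phi1 c \<sigma> (Suc t) (x # ys) = phi1 c (sx \<sigma> x) t ys"
  using enat_shift[OF assms(1), of t] assms(2) by (simp add: phi1_def sx_def ext_Cons)

lemma phi2_shift:
  assumes "\<sigma> (shift x (ext ys)) \<noteq> 0" "ys \<noteq> []"
  shows "phi2 f \<sigma> (Suc t) (x # ys) = phi2 f (sx \<sigma> x) t ys"
  using enat_shift[OF assms(1), of t] assms(2) by (simp add: phi2_def sx_def ext_Cons)

context rb begin

lemma valid_passive: "valid passive_pol" by (simp add: valid_def passive_pol_def)

lemma W_bd: "\<bar>Wf P c \<beta> l x\<bar> \<le> M l"
proof -
  have 1: "\<bar>infsum (\<lambda>y. P 1 x y * Vf P c \<beta> l y) UNIV\<bar> \<le> M l" by (rule PV_bound) (auto intro: V_bd)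
  have "\<bar>Wf P c \<beta> l x\<bar> \<le> \<bar>(1 - \<beta>) * l\<bar> + \<bar>\<beta> * infsum (\<lambda>y. P 1 x y * Vf P c \<beta> l y) UNIV\<bar>"
    unfolding Wf_def by (rule abs_triangle_ineq)
  also have "\<dots> \<le> (1 - \<beta>) * M l + \<beta> * M l"
  proof (rule add_mono)
    show "\<bar>(1 - \<beta>) * l\<bar> \<le> (1 - \<beta>) * M l" using b1 Bc_nn by (simp add: abs_mult M_def mult_left_mono)
    show "\<bar>\<beta> * infsum (\<lambda>y. P 1 x y * Vf P c \<beta> l y) UNIV\<bar> \<le> \<beta> * M l"
      using 1 b0 by (simp add: abs_mult mult_left_mono)
  qed
  finally show ?thesis by (simp add: algebra_simps)
qed

lemma phi1_bd: "\<bar>phi1 c \<sigma> t xs\<bar> \<le> Bc" using cbd[of 0] Bc_nn by (simp add: phi1_def)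
lemma phi2c_bd: "\<bar>phi2 (\<lambda>y. c y 1) \<sigma> t xs\<bar> \<le> Bc" using cbd[of 1] Bc_nn by (simp add: phi2_def)
lemma phi2W_bd: "\<bar>phi2 (Wf P c \<beta> l) \<sigma> t xs\<bar> \<le> M l" using W_bd M_nn by (simp add: phi2_def)

definition R :: "real \<Rightarrow> 'x \<Rightarrow> ((nat \<Rightarrow> 'x) \<Rightarrow> enat) \<Rightarrow> real" where
  "R l x \<sigma> = (1 - \<beta>) * Lf P c \<beta> x \<sigma> + Estop P \<beta> x \<sigma> (Wf P c \<beta> l)"

definition KR :: "real \<Rightarrow> real" where "KR l = 2 * Bc + M l / (1 - \<beta>)"

lemma R_bd: "\<bar>R l x \<sigma>\<bar> \<le> KR l"
proof -
  have 1: "\<bar>SS P \<beta> passive_pol x (phi1 c \<sigma>)\<bar> \<le> Bc / (1 - \<beta>)"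
    by (rule SS_summ(2)[OF valid_passive]) (rule phi1_bd)
  have 2: "\<bar>SS P \<beta> passive_pol x (phi2 (\<lambda>y. c y 1) \<sigma>)\<bar> \<le> Bc / (1 - \<beta>)"
    by (rule SS_summ(2)[OF valid_passive]) (rule phi2c_bd)
  have 3: "\<bar>SS P \<beta> passive_pol x (phi2 (Wf P c \<beta> l) \<sigma>)\<bar> \<le> M l / (1 - \<beta>)"
    by (rule SS_summ(2)[OF valid_passive]) (rule phi2W_bd)
  have "\<bar>Lf P c \<beta> x \<sigma>\<bar> \<le> 2 * Bc / (1 - \<beta>)"
    unfolding Lf_SS using 1 2 by (simp add: abs_le_iff)
  hence "(1 - \<beta>) * \<bar>Lf P c \<beta> x \<sigma>\<bar> \<le> (1 - \<beta>) * (2 * Bc / (1 - \<beta>))"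
    using b1 by (intro mult_left_mono) auto
  hence "\<bar>(1 - \<beta>) * Lf P c \<beta> x \<sigma>\<bar> \<le> 2 * Bc" using b1 by (simp add: abs_mult)
  moreover have "\<bar>R l x \<sigma>\<bar> \<le> \<bar>(1 - \<beta>) * Lf P c \<beta> x \<sigma>\<bar> + \<bar>Estop P \<beta> x \<sigma> (Wf P c \<beta> l)\<bar>"
    unfolding R_def by (rule abs_triangle_ineq)
  ultimately show ?thesis using 3 by (simp add: KR_def Estop_SS)
qed

end


context rb begin

lemma SS_head_only:
  assumes "\<And>t xs. \<bar>\<phi> t xs\<bar> \<le> K"
    and "\<And>y t ys. ys \<in> paths y t \<Longrightarrow> \<phi> (Suc t) (x # ys) = 0"
  shows "SS P \<beta> passive_pol x \<phi> = \<phi> 0 [x]"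
proof -
  have "SS P \<beta> passive_pol y (\<lambda>t ys. \<phi> (Suc t) (x # ys)) = 0" for y
    by (rule SS_zero) (rule assms(2))
  thus ?thesis using SS_step[OF valid_passive assms(1), where x=x] by (simp add: hs_passive)
qed

lemma SS_shift:
  assumes "\<And>t xs. \<bar>\<phi> t xs\<bar> \<le> K"
    and "\<And>y t ys. ys \<in> paths y t \<Longrightarrow> \<phi> (Suc t) (x # ys) = \<psi> t ys"
  shows "SS P \<beta> passive_pol x \<phi> = \<phi> 0 [x] + \<beta> * infsum (\<lambda>y. P 0 x y * SS P \<beta> passive_pol y \<psi>) UNIV"
proof -
  have "SS P \<beta> passive_pol y (\<lambda>t ys. \<phi> (Suc t) (x # ys)) = SS P \<beta> passive_pol y \<psi>" for y
    by (rule SS_cong_f) (rule assms(2))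
  thus ?thesis using SS_step[OF valid_passive assms(1), where x=x] by (simp add: hs_passive passive_pol_def)
qed

lemma case_zero:
  assumes st: "stopping_time \<sigma>" and z: "\<sigma> (\<lambda>_. x) = 0"
  shows "Jh P c \<beta> l (h_stop P c \<beta> l \<sigma>) x = R l x \<sigma>"
proof -
  have zall: "\<sigma> \<omega> = 0" if "\<omega> 0 = x" for \<omega>
    using stop_zero_same[OF st, of \<omega> "\<lambda>_. x"] that z by simp
  have zc: "\<sigma> (ext (x # ys)) = 0" for ys
    by (rule zall) (simp add: ext_def)
  have "Jh P c \<beta> l (h_stop P c \<beta> l \<sigma>) x = Jh P c \<beta> l (h0 l) x"
  proof (rule Jh_cong)
    fix ys :: "'x list" assume "ys \<noteq> []" "hd ys = x"
    hence "\<sigma> (ext ys) = 0" using zall ext_0 by metis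
    thus "h_stop P c \<beta> l \<sigma> ys = h0 l ys" by (simp add: h0_def h_stop_def)
  qed
  also have "\<dots> = (1 - \<beta>) * c x 1 + Wf P c \<beta> l x" by (simp only: J_h0 H1_W)
  finally have J: "Jh P c \<beta> l (h_stop P c \<beta> l \<sigma>) x = (1 - \<beta>) * c x 1 + Wf P c \<beta> l x" .
  have s1: "SS P \<beta> passive_pol x (phi1 c \<sigma>) = 0"
  proof -
    have "SS P \<beta> passive_pol x (phi1 c \<sigma>) = phi1 c \<sigma> 0 [x]"
      by (rule SS_head_only[OF phi1_bd]) (simp add: phi1_def zc)
    thus ?thesis by (simp add: phi1_def ext_single z)
  qed
  have s2: "SS P \<beta> passive_pol x (phi2 (\<lambda>y. c y 1) \<sigma>) = c x 1"
  proof -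
    have "SS P \<beta> passive_pol x (phi2 (\<lambda>y. c y 1) \<sigma>) = phi2 (\<lambda>y. c y 1) \<sigma> 0 [x]"
      by (rule SS_head_only[OF phi2c_bd]) (simp add: phi2_def zc zero_enat_def)
    thus ?thesis by (simp add: phi2_def ext_single z zero_enat_def)
  qed
  have s3: "SS P \<beta> passive_pol x (phi2 (Wf P c \<beta> l) \<sigma>) = Wf P c \<beta> l x"
  proof -
    have "SS P \<beta> passive_pol x (phi2 (Wf P c \<beta> l) \<sigma>) = phi2 (Wf P c \<beta> l) \<sigma> 0 [x]"
      by (rule SS_head_only[OF phi2W_bd]) (simp add: phi2_def zc zero_enat_def)
    thus ?thesis by (simp add: phi2_def ext_single z zero_enat_def)
  qed
  show ?thesis unfolding J R_def Lf_SS Estop_SS s1 s2 s3 by simp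
qed

lemma case_nonzero:
  assumes st: "stopping_time \<sigma>" and nz: "\<sigma> (\<lambda>_. x) \<noteq> 0"
  shows "Jh P c \<beta> l (h_stop P c \<beta> l \<sigma>) x - R l x \<sigma>
     = \<beta> * infsum (\<lambda>y. P 0 x y * (Jh P c \<beta> l (h_stop P c \<beta> l (sx \<sigma> x)) y - R l y (sx \<sigma> x))) UNIV"
proof -
  have nzall: "\<sigma> \<omega> \<noteq> 0" if "\<omega> 0 = x" for \<omega>
    using stop_zero_same[OF st, of \<omega> "\<lambda>_. x"] that nz by simp
  have nzs: "\<sigma> (shift x \<omega>) \<noteq> 0" for \<omega> by (rule nzall) (simp add: shift_def)
  have hx: "h_stop P c \<beta> l \<sigma> [x] = 0"
    using nz by (simp add: h_stop_def ext_single zero_enat_def[symmetric])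
  have hsx: "hs (h_stop P c \<beta> l \<sigma>) x ys = h_stop P c \<beta> l (sx \<sigma> x) ys" if ys: "ys \<noteq> []" for ys
  proof -
    obtain m where m: "length ys = Suc m" using ys by (cases ys) auto
    show ?thesis using enat_shift[OF nzs[of "ext ys"], of m] ys
      by (simp add: hs_def h_stop_def ext_Cons m sx_def)
  qed
  have Jc: "Jh P c \<beta> l (hs (h_stop P c \<beta> l \<sigma>) x) y = Jh P c \<beta> l (h_stop P c \<beta> l (sx \<sigma> x)) y" for y
    by (rule Jh_cong) (simp add: hsx)
  have J: "Jh P c \<beta> l (h_stop P c \<beta> l \<sigma>) x = (1 - \<beta>) * c x 0
      + \<beta> * infsum (\<lambda>y. P 0 x y * Jh P c \<beta> l (h_stop P c \<beta> l (sx \<sigma> x)) y) UNIV"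
    using J_step[where h="h_stop P c \<beta> l \<sigma>" and l=l and x=x, OF valid_hstop]
    unfolding hx Jc by (simp add: cl_def)
  define S1 where "S1 y = SS P \<beta> passive_pol y (phi1 c (sx \<sigma> x))" for y
  define S2 where "S2 y = SS P \<beta> passive_pol y (phi2 (\<lambda>y. c y 1) (sx \<sigma> x))" for y
  define S3 where "S3 y = SS P \<beta> passive_pol y (phi2 (Wf P c \<beta> l) (sx \<sigma> x))" for y
  have pm: "ys \<in> paths y t \<Longrightarrow> ys \<noteq> []" for ys y t using mem_paths by metis
  have sh1: "phi1 c \<sigma> (Suc t) (x # ys) = phi1 c (sx \<sigma> x) t ys" if "ys \<in> paths y t" for y t ys
    using phi1_shift[where \<sigma>=\<sigma> and x=x and ys=ys and c=c and t=t] nzs[of "ext ys"] pm[OF that] by simp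
  have sh2: "phi2 f \<sigma> (Suc t) (x # ys) = phi2 f (sx \<sigma> x) t ys" if "ys \<in> paths y t" for y t ys f
    using phi2_shift[where \<sigma>=\<sigma> and x=x and ys=ys and f=f and t=t] nzs[of "ext ys"] pm[OF that] by simp
  have e1: "SS P \<beta> passive_pol x (phi1 c \<sigma>) = c x 0 + \<beta> * infsum (\<lambda>y. P 0 x y * S1 y) UNIV"
  proof -
    have "SS P \<beta> passive_pol x (phi1 c \<sigma>) = phi1 c \<sigma> 0 [x] + \<beta> * infsum (\<lambda>y. P 0 x y * S1 y) UNIV"
      unfolding S1_def by (rule SS_shift[OF phi1_bd]) (rule sh1)
    moreover have "phi1 c \<sigma> 0 [x] = c x 0"
      using nz by (simp add: phi1_def ext_single zero_enat_def[symmetric])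
    ultimately show ?thesis by simp
  qed
  have e2: "SS P \<beta> passive_pol x (phi2 (\<lambda>y. c y 1) \<sigma>) = \<beta> * infsum (\<lambda>y. P 0 x y * S2 y) UNIV"
  proof -
    have "SS P \<beta> passive_pol x (phi2 (\<lambda>y. c y 1) \<sigma>) = phi2 (\<lambda>y. c y 1) \<sigma> 0 [x] + \<beta> * infsum (\<lambda>y. P 0 x y * S2 y) UNIV"
      unfolding S2_def by (rule SS_shift[OF phi2c_bd]) (rule sh2)
    moreover have "phi2 (\<lambda>y. c y 1) \<sigma> 0 [x] = 0"
      using nz by (simp add: phi2_def ext_single zero_enat_def[symmetric])
    ultimately show ?thesis by simp
  qed
  have e3: "SS P \<beta> passive_pol x (phi2 (Wf P c \<beta> l) \<sigma>) = \<beta> * infsum (\<lambda>y. P 0 x y * S3 y) UNIV"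
  proof -
    have "SS P \<beta> passive_pol x (phi2 (Wf P c \<beta> l) \<sigma>) = phi2 (Wf P c \<beta> l) \<sigma> 0 [x] + \<beta> * infsum (\<lambda>y. P 0 x y * S3 y) UNIV"
      unfolding S3_def by (rule SS_shift[OF phi2W_bd]) (rule sh2)
    moreover have "phi2 (Wf P c \<beta> l) \<sigma> 0 [x] = 0"
      using nz by (simp add: phi2_def ext_single zero_enat_def[symmetric])
    ultimately show ?thesis by simp
  qed
  have b1': "\<bar>S1 y\<bar> \<le> Bc / (1 - \<beta>)" for y
    unfolding S1_def by (rule SS_summ(2)[OF valid_passive]) (rule phi1_bd)
  have b2': "\<bar>S2 y\<bar> \<le> Bc / (1 - \<beta>)" for y
    unfolding S2_def by (rule SS_summ(2)[OF valid_passive]) (rule phi2c_bd)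
  have b3': "\<bar>S3 y\<bar> \<le> M l / (1 - \<beta>)" for y
    unfolding S3_def by (rule SS_summ(2)[OF valid_passive]) (rule phi2W_bd)
  have Rsx: "R l y (sx \<sigma> x) = (1 - \<beta>) * S1 y + (1 - \<beta>) * S2 y + S3 y" for y
    unfolding R_def Lf_SS Estop_SS S1_def S2_def S3_def by (simp add: algebra_simps)
  have sm1: "(\<lambda>y. P 0 x y * S1 y) summable_on UNIV" by (rule PV_summable[OF _ b1']) simp
  have sm2: "(\<lambda>y. P 0 x y * S2 y) summable_on UNIV" by (rule PV_summable[OF _ b2']) simp
  have sm3: "(\<lambda>y. P 0 x y * S3 y) summable_on UNIV" by (rule PV_summable[OF _ b3']) simp
  have sm1': "(\<lambda>y. (1 - \<beta>) * (P 0 x y * S1 y)) summable_on UNIV" by (rule summable_on_cmult_right[OF sm1])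
  have sm2': "(\<lambda>y. (1 - \<beta>) * (P 0 x y * S2 y)) summable_on UNIV" by (rule summable_on_cmult_right[OF sm2])
  have "infsum (\<lambda>y. P 0 x y * R l y (sx \<sigma> x)) UNIV
      = infsum (\<lambda>y. (1 - \<beta>) * (P 0 x y * S1 y) + (1 - \<beta>) * (P 0 x y * S2 y) + P 0 x y * S3 y) UNIV"
    unfolding Rsx by (simp add: algebra_simps)
  also have "\<dots> = infsum (\<lambda>y. (1 - \<beta>) * (P 0 x y * S1 y) + (1 - \<beta>) * (P 0 x y * S2 y)) UNIV + infsum (\<lambda>y. P 0 x y * S3 y) UNIV"
    by (rule infsum_add[OF summable_on_add[OF sm1' sm2'] sm3])
  also have "infsum (\<lambda>y. (1 - \<beta>) * (P 0 x y * S1 y) + (1 - \<beta>) * (P 0 x y * S2 y)) UNIV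
      = (1 - \<beta>) * infsum (\<lambda>y. P 0 x y * S1 y) UNIV + (1 - \<beta>) * infsum (\<lambda>y. P 0 x y * S2 y) UNIV"
    by (simp add: infsum_add[OF sm1' sm2'] infsum_cmult_right')
  finally have RR: "infsum (\<lambda>y. P 0 x y * R l y (sx \<sigma> x)) UNIV
      = (1 - \<beta>) * infsum (\<lambda>y. P 0 x y * S1 y) UNIV + (1 - \<beta>) * infsum (\<lambda>y. P 0 x y * S2 y) UNIV
        + infsum (\<lambda>y. P 0 x y * S3 y) UNIV" .
  have R: "R l x \<sigma> = (1 - \<beta>) * c x 0 + \<beta> * infsum (\<lambda>y. P 0 x y * R l y (sx \<sigma> x)) UNIV"
  proof -
    have R0: "R l x \<sigma> = (1 - \<beta>) * (c x 0 + \<beta> * infsum (\<lambda>y. P 0 x y * S1 y) UNIV + \<beta> * infsum (\<lambda>y. P 0 x y * S2 y) UNIV)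
        + \<beta> * infsum (\<lambda>y. P 0 x y * S3 y) UNIV"
      unfolding R_def Lf_SS Estop_SS e1 e2 e3 by simp
    show ?thesis unfolding RR R0 by (simp add: algebra_simps)
  qed
  have "Jh P c \<beta> l (h_stop P c \<beta> l \<sigma>) x - R l x \<sigma>
     = \<beta> * (infsum (\<lambda>y. P 0 x y * Jh P c \<beta> l (h_stop P c \<beta> l (sx \<sigma> x)) y) UNIV
           - infsum (\<lambda>y. P 0 x y * R l y (sx \<sigma> x)) UNIV)"
    unfolding J R by (simp add: algebra_simps)
  also have "\<dots> = \<beta> * infsum (\<lambda>y. P 0 x y * (Jh P c \<beta> l (h_stop P c \<beta> l (sx \<sigma> x)) y - R l y (sx \<sigma> x))) UNIV"
    by (subst PV_diff[OF _ J_bound[OF valid_hstop] R_bd]) simp_all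
  finally show ?thesis .
qed

lemma J_stop:
  assumes st: "stopping_time \<sigma>"
  shows "Jh P c \<beta> l (h_stop P c \<beta> l \<sigma>) x = R l x \<sigma>"
proof -
  define D where "D = (\<lambda>(x, \<sigma>). Jh P c \<beta> l (h_stop P c \<beta> l \<sigma>) x - R l x \<sigma>)"
  have "D (x, \<sigma>) = 0"
  proof (rule contr_zero[OF b0 b1, where S="{(x, \<sigma>). stopping_time \<sigma>}" and K="M l + KR l" and D=D and a="(x, \<sigma>)"])
    fix a :: "'x \<times> ((nat \<Rightarrow> 'x) \<Rightarrow> enat)" assume "a \<in> {(x, \<sigma>). stopping_time \<sigma>}"
    then obtain y \<tau> where a: "a = (y, \<tau>)" by auto
    have "\<bar>D a\<bar> \<le> \<bar>Jh P c \<beta> l (h_stop P c \<beta> l \<tau>) y\<bar> + \<bar>R l y \<tau>\<bar>"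
      unfolding a D_def by (simp add: abs_triangle_ineq4)
    thus "\<bar>D a\<bar> \<le> M l + KR l" using J_bound[where h="h_stop P c \<beta> l \<tau>" and l=l and x=y, OF valid_hstop] R_bd[of l y \<tau>] by simp
  next
    fix K' and a :: "'x \<times> ((nat \<Rightarrow> 'x) \<Rightarrow> enat)"
    assume h: "\<And>b. b \<in> {(x, \<sigma>). stopping_time \<sigma>} \<Longrightarrow> \<bar>D b\<bar> \<le> K'" and "a \<in> {(x, \<sigma>). stopping_time \<sigma>}"
    then obtain y \<tau> where a: "a = (y, \<tau>)" "stopping_time \<tau>" by auto
    have K': "0 \<le> K'" using h[of a] a by auto
    show "\<bar>D a\<bar> \<le> \<beta> * K'"
    proof (cases "\<tau> (\<lambda>_. y) = 0")
      case True
      then show ?thesis using case_zero[OF a(2) True] K' b0 by (simp add: D_def a)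
    next
      case False
      have "\<bar>infsum (\<lambda>z. P 0 y z * (Jh P c \<beta> l (h_stop P c \<beta> l (sx \<tau> y)) z - R l z (sx \<tau> y))) UNIV\<bar> \<le> K'"
        by (rule PV_bound) (use h[of "(_, sx \<tau> y)"] stopping_sx[OF a(2)] in \<open>auto simp: D_def\<close>)
      then show ?thesis using case_nonzero[OF a(2) False] b0
        by (simp add: D_def a abs_mult mult_left_mono)
    qed
  qed (use st in simp)
  thus ?thesis by (simp add: D_def)
qed

end


theorem proposition1:
  fixes P :: "nat \<Rightarrow> 'x::countable \<Rightarrow> 'x \<Rightarrow> real"
    and c :: "'x \<Rightarrow> nat \<Rightarrow> real"
    and \<beta> l :: real
  assumes "0 < \<beta>" and "\<beta> < 1"
    and "\<forall>a\<in>{0,1}. \<forall>x y. 0 \<le> P a x y"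
    and "\<forall>a\<in>{0,1}. \<forall>x. ((\<lambda>y. P a x y) has_sum 1) UNIV"
    and "\<exists>B. \<forall>x. \<forall>a\<in>{0,1}. \<bar>c x a\<bar> \<le> B"
  defines "Pa \<equiv> {x. gf P c \<beta> l x = 0}"
    and "Pb \<equiv> {x. Hf P c \<beta> l x 0 < Hf P c \<beta> l x 1}"
    and "Pc \<equiv> {x. \<exists>\<sigma>. stopping_time \<sigma> \<and> \<sigma> \<noteq> (\<lambda>_. 0) \<and>
                  Jh P c \<beta> l (h_stop P c \<beta> l \<sigma>) x < Jh P c \<beta> l (h_stop P c \<beta> l (\<lambda>_. 0)) x}"
    and "Pd \<equiv> {x. \<exists>\<sigma>. stopping_time \<sigma> \<and> \<sigma> \<noteq> (\<lambda>_. 0) \<and>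
                  (1 - \<beta>) * (Lf P c \<beta> x \<sigma> - c x 1)
                    < Wf P c \<beta> l x - Estop P \<beta> x \<sigma> (Wf P c \<beta> l)}"
  shows "Pa = Pb \<and> Pb = Pc \<and> Pc = Pd"
proof -
  obtain B where B: "\<forall>x. \<forall>a\<in>{0,1}. \<bar>c x a\<bar> \<le> B" using assms(5) by blast
  have a01: "(a::nat) \<le> 1 \<Longrightarrow> a \<in> {0, 1}" for a by auto
  interpret rb P c \<beta> B
  proof
    show "0 < \<beta>" "\<beta> < 1" by (rule assms(1), rule assms(2))
    show "\<And>a x y. a \<le> 1 \<Longrightarrow> 0 \<le> P a x y" using assms(3) a01 by blast
    show "\<And>a x. a \<le> 1 \<Longrightarrow> ((\<lambda>y. P a x y) has_sum 1) UNIV" using assms(4) a01 by blast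
    show "\<And>x a. a \<le> 1 \<Longrightarrow> \<bar>c x a\<bar> \<le> B" using B a01 by blast
  qed
  have J0: "Jh P c \<beta> l (h_stop P c \<beta> l (\<lambda>_. 0)) x = (1 - \<beta>) * c x 1 + Wf P c \<beta> l x" for x
    using J_h0[of l x] H1_W[of l x] by (simp add: h0_def)
  have ab: "Pa = Pb" unfolding Pa_def Pb_def gf_def by auto
  have bc: "Pb = Pc"
  proof
    show "Pb \<subseteq> Pc"
    proof
      fix x assume "x \<in> Pb"
      hence lt: "Hf P c \<beta> l x 0 < Hf P c \<beta> l x 1" by (simp add: Pb_def)
      have "Jh P c \<beta> l (h_stop P c \<beta> l (sg l)) x < Jh P c \<beta> l (h_stop P c \<beta> l (\<lambda>_. 0)) x"
        using J_sg[of l x] J_h0[of l x] lt by (simp add: h0_def)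
      thus "x \<in> Pc" unfolding Pc_def using sg_stopping[of l] sg_nonzero_fun[of l] by blast
    qed
  next
    show "Pc \<subseteq> Pb"
    proof
      fix x assume "x \<in> Pc"
      then obtain \<sigma> where lt: "Jh P c \<beta> l (h_stop P c \<beta> l \<sigma>) x < Jh P c \<beta> l (h_stop P c \<beta> l (\<lambda>_. 0)) x"
        unfolding Pc_def by blast
      show "x \<in> Pb"
      proof (rule ccontr)
        assume "x \<notin> Pb"
        hence "Vf P c \<beta> l x = Hf P c \<beta> l x 1" using V_eq[of l x] by (simp add: Pb_def min_def)
        moreover have "Vf P c \<beta> l x \<le> Jh P c \<beta> l (h_stop P c \<beta> l \<sigma>) x"
          by (rule optimal[OF valid_hstop])
        ultimately show False using lt J_h0[of l x] by (simp add: h0_def)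
      qed
    qed
  qed
  have cd: "Pc = Pd"
  proof -
    have "(Jh P c \<beta> l (h_stop P c \<beta> l \<sigma>) x < Jh P c \<beta> l (h_stop P c \<beta> l (\<lambda>_. 0)) x)
        \<longleftrightarrow> ((1 - \<beta>) * (Lf P c \<beta> x \<sigma> - c x 1) < Wf P c \<beta> l x - Estop P \<beta> x \<sigma> (Wf P c \<beta> l))"
      if "stopping_time \<sigma>" for x \<sigma>
      unfolding J_stop[OF that] J0 R_def right_diff_distrib by linarith
    thus ?thesis unfolding Pc_def Pd_def by blast
  qed
  show ?thesis using ab bc cd by blast
qed


end
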